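(* Let $M$ be a small Seifert manifold with nonzero Euler number and let $\chi$ be an exceptional abelian character of $M$. Then the Zariski tangent space $T_\chi{\mathcal{X}}(M)$ of the character scheme at $\chi$ has dimension $1$ over $\mathbb{C}$.
   Context: A small Seifert manifold is $M=S^2(-\frac{q_1}{p_1},-\frac{q_2}{p_2},\frac{q_3}{p_3})$ (integers $p_i\ge2$, $\gcd(p_i,q_i)=1$), fibering over $S^2$ with three exceptional fibers, with $\pi_1(M)=\langle h,c_1,c_2\mid hc_1=c_1h,\ hc_2=c_2h,\ c_i^{p_i}=h^{q_i}\ (i=1,2,3)\rangle$, $c_3:=c_1c_2$; nonzero Euler number means $-\frac{q_1}{p_1}-\frac{q_2}{p_2}+\frac{q_3}{p_3}\neq0$. ${\mathcal{X}}(M)$ is the $\mathrm{SL}_2(\mathbb{C})$-character scheme $\mathrm{Hom}(\pi_1(M),\mathrm{SL}_2(\mathbb{C}))/\!/\mathrm{SL}_2(\mathbb{C})$ (scheme-theoretic), whose coordinate ring is the commutative $\mathbb{C}$-algebra generated by $t_x$, $x\in\pi_1(M)$, with relations $t_{xy}+t_{xy^{-1}}=t_xt_y$, $t_{xy}=t_{yx}$, $t_1=2$. A character $\chi$ is exceptional abelian if it is the character of a representation with abelian image and $\chi(h)=\pm2$, $\chi(c_i)\neq\pm2$ for $i=1,2,3$ (where $\chi(g)$ denotes the trace of $g$). *)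

theory Defs
  imports "HOL-Analysis.Analysis" "HOL-Library.Function_Algebras"
begin

text \<open>Generators of pi_1(M): h, c1, c2. A letter is a generator with a flag
  (True = inverse). Group elements are words modulo the congruence generated by
  free cancellation and the defining relators.\<close>

datatype gen = Gh | Gc1 | Gc2

type_synonym letter = "gen \<times> bool"
type_synonym word = "letter list"

definition flip :: "letter \<Rightarrow> letter" where
  "flip a = (fst a, \<not> snd a)"

definition winv :: "word \<Rightarrow> word" where
  "winv w = rev (map flip w)"

definition wpow :: "word \<Rightarrow> int \<Rightarrow> word" where
  "wpow w k = (if 0 \<le> k then concat (replicate (nat k) w)
               else concat (replicate (nat (- k)) (winv w)))"

definition wh :: word where "wh = [(Gh, False)]"
definition wc1 :: word where "wc1 = [(Gc1, False)]"
definition wc2 :: word where "wc2 = [(Gc2, False)]"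
definition wc3 :: word where "wc3 = wc1 @ wc2"

definition relators :: "int \<Rightarrow> int \<Rightarrow> int \<Rightarrow> int \<Rightarrow> int \<Rightarrow> int \<Rightarrow> word set" where
  "relators p1 q1 p2 q2 p3 q3 =
     { wh @ wc1 @ winv wh @ winv wc1,
       wh @ wc2 @ winv wh @ winv wc2,
       wpow wc1 p1 @ wpow wh (- q1),
       wpow wc2 p2 @ wpow wh (- q2),
       wpow wc3 p3 @ wpow wh (- q3) }"

inductive wequiv :: "word set \<Rightarrow> word \<Rightarrow> word \<Rightarrow> bool" for R where
  refl: "wequiv R u u"
| sym: "wequiv R u v \<Longrightarrow> wequiv R v u"
| trans: "wequiv R u v \<Longrightarrow> wequiv R v w \<Longrightarrow> wequiv R u w"
| cancel: "wequiv R (u @ [a, flip a] @ v) (u @ v)"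
| rel: "r \<in> R \<Longrightarrow> wequiv R (u @ r @ v) (u @ v)"

text \<open>Functions on pi_1 = functions on words constant on equivalence classes.\<close>
definition respects_pi1 :: "word set \<Rightarrow> (word \<Rightarrow> 'a) \<Rightarrow> bool" where
  "respects_pi1 R f \<longleftrightarrow> (\<forall>u v. wequiv R u v \<longrightarrow> f u = f v)"

type_synonym mat2 = "complex^2^2"

definition SL2 :: "mat2 set" where
  "SL2 = {A. det A = 1}"

fun weval :: "(gen \<Rightarrow> mat2) \<Rightarrow> word \<Rightarrow> mat2" where
  "weval rho [] = mat 1"
| "weval rho (a # w) = (if snd a then matrix_inv (rho (fst a)) else rho (fst a)) ** weval rho w"

definition is_rep :: "word set \<Rightarrow> (gen \<Rightarrow> mat2) \<Rightarrow> bool" where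
  "is_rep R rho \<longleftrightarrow> (\<forall>g. rho g \<in> SL2) \<and> (\<forall>r\<in>R. weval rho r = mat 1)"

definition abelian_image :: "(gen \<Rightarrow> mat2) \<Rightarrow> bool" where
  "abelian_image rho \<longleftrightarrow> (\<forall>u v. weval rho u ** weval rho v = weval rho v ** weval rho u)"

definition character :: "(gen \<Rightarrow> mat2) \<Rightarrow> word \<Rightarrow> complex" where
  "character rho w = trace (weval rho w)"

definition exceptional_abelian :: "word set \<Rightarrow> (word \<Rightarrow> complex) \<Rightarrow> bool" where
  "exceptional_abelian R chi \<longleftrightarrow>
     (\<exists>rho. is_rep R rho \<and> abelian_image rho \<and> chi = character rho) \<and>
     (chi wh = 2 \<or> chi wh = -2) \<and>
     (\<forall>c\<in>{wc1, wc2, wc3}. chi c \<noteq> 2 \<and> chi c \<noteq> -2)"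

text \<open>Zariski tangent space of the character scheme at a C-point chi:
  C-algebra maps from the coordinate ring (generated by t_x, x in pi_1, with
  relations t_xy + t_xy^-1 = t_x t_y, t_xy = t_yx, t_1 = 2) to the dual numbers
  C[eps] lifting chi, i.e. t_x |-> chi(x) + eps d(x). This is the space of the
  first-order parts d (equivalently, chi-derivations of the coordinate ring).\<close>
definition char_tangent :: "word set \<Rightarrow> (word \<Rightarrow> complex) \<Rightarrow> (word \<Rightarrow> complex) set" where
  "char_tangent R chi = {d. respects_pi1 R d \<and>
      (\<forall>x y. d (x @ y) + d (x @ winv y) = chi x * d y + d x * chi y) \<and>
      (\<forall>x y. d (x @ y) = d (y @ x)) \<and>
      d [] = 0}"

definition fscale :: "complex \<Rightarrow> (word \<Rightarrow> complex) \<Rightarrow> (word \<Rightarrow> complex)" where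
  "fscale c f = (\<lambda>x. c * f x)"

end

theory Submission
  imports Defs
begin

lemma flip_flip[simp]: "flip (flip a) = a" by (simp add: flip_def)
lemma winv_Nil[simp]: "winv [] = []" by (simp add: winv_def)
lemma winv_Cons: "winv (a # w) = winv w @ [flip a]" by (simp add: winv_def)
lemma winv_append[simp]: "winv (x @ y) = winv y @ winv x" by (simp add: winv_def)
lemma winv_winv[simp]: "winv (winv w) = w" by (simp add: winv_def rev_map comp_def)
lemma length_winv[simp]: "length (winv w) = length w" by (simp add: winv_def)

lemma wequiv_cong: "wequiv R u v \<Longrightarrow> wequiv R (x @ u @ y) (x @ v @ y)"
proof (induction rule: wequiv.induct)
  case (refl u) then show ?case by (rule wequiv.refl)
next
  case (sym u v) then show ?case by (blast intro: wequiv.sym)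
next
  case (trans u v w) then show ?case by (blast intro: wequiv.trans)
next
  case (cancel u a v)
  have "wequiv R ((x @ u) @ [a, flip a] @ (v @ y)) ((x @ u) @ (v @ y))" by (rule wequiv.cancel)
  then show ?case by simp
next
  case (rel r u v)
  have "wequiv R ((x @ u) @ r @ (v @ y)) ((x @ u) @ (v @ y))" using rel by (rule wequiv.rel)
  then show ?case by simp
qed

lemma wequiv_cancel_inv: "wequiv R (winv w @ w @ u) u"
proof (induction w arbitrary: u)
  case Nil then show ?case by (simp add: wequiv.refl)
next
  case (Cons a w)
  have "wequiv R (winv w @ [flip a, flip (flip a)] @ (w @ u)) (winv w @ (w @ u))"
    by (rule wequiv.cancel)
  then have "wequiv R (winv (a # w) @ (a # w) @ u) (winv w @ w @ u)" by (simp add: winv_Cons)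
  then show ?case using Cons by (blast intro: wequiv.trans)
qed

lemma wequiv_cancel_inv2: "wequiv R (w @ winv w @ u) u"
  using wequiv_cancel_inv[of R "winv w" u] by simp

lemma wequiv_rel0: "r \<in> R \<Longrightarrow> wequiv R r []"
  using wequiv.rel[of r R "[]" "[]"] by simp

lemma wequiv_rel_eq:
  assumes "u @ winv t \<in> R" shows "wequiv R u t"
proof -
  have "wequiv R (u @ winv t @ t) ([] @ t)"
    using wequiv_cong[OF wequiv_rel0[OF assms], of "[]" t] by simp
  moreover have "wequiv R (u @ (winv t @ t @ [])) (u @ [] @ [])"
    using wequiv_cong[OF wequiv_cancel_inv[of R t "[]"], of u "[]"] by simp
  ultimately show ?thesis by (auto intro: wequiv.trans wequiv.sym)
qed

definition gp :: "word \<Rightarrow> nat \<Rightarrow> word" where "gp w n = concat (replicate n w)"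

lemma gp_0[simp]: "gp w 0 = []" by (simp add: gp_def)
lemma gp_Suc: "gp w (Suc n) = w @ gp w n" by (simp add: gp_def)
lemma gp_Suc2: "gp w (Suc n) = gp w n @ w"
  by (simp add: gp_def replicate_append_same[symmetric] del: replicate_append_same)
lemma length_gp[simp]: "length (gp w n) = n * length w"
  by (induction n) (auto simp: gp_Suc)
lemma gp_comm: "gp w n @ w = w @ gp w n"
  by (metis gp_Suc gp_Suc2)
lemma winv_gp: "winv (gp w n) = gp (winv w) n"
  by (induction n) (auto simp: gp_Suc gp_comm)

lemma wpow_nonneg: "0 \<le> k \<Longrightarrow> wpow w k = gp w (nat k)" by (simp add: wpow_def gp_def)
lemma wpow_neg: "k < 0 \<Longrightarrow> wpow w k = gp (winv w) (nat (- k))" by (simp add: wpow_def gp_def)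
lemma wpow_uminus: "wpow w (- k) = winv (wpow w k)"
  by (cases "k = 0") (auto simp: wpow_def gp_def[symmetric] winv_gp)

section \<open>Multiplicative characters of words\<close>

fun lamw :: "(gen \<Rightarrow> complex) \<Rightarrow> word \<Rightarrow> complex" where
  "lamw lam [] = 1"
| "lamw lam (a # w) = (if snd a then inverse (lam (fst a)) else lam (fst a)) * lamw lam w"

lemma lamw_append[simp]: "lamw lam (x @ y) = lamw lam x * lamw lam y"
  by (induction x) auto

lemma lamw_winv[simp]: "lamw lam (winv w) = inverse (lamw lam w)"
  by (induction w) (auto simp: winv_Cons flip_def)

lemma lamw_gp[simp]: "lamw lam (gp w n) = lamw lam w ^ n"
  by (induction n) (auto simp: gp_Suc)

lemma lamw_nz: "(\<And>g. lam g \<noteq> 0) \<Longrightarrow> lamw lam w \<noteq> 0"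
  by (induction w) auto

definition chiL :: "(gen \<Rightarrow> complex) \<Rightarrow> word \<Rightarrow> complex" where
  "chiL lam w = lamw lam w + inverse (lamw lam w)"

section \<open>Truncated polynomials C[t]/(t^3)\<close>

datatype tp = TP (tp0: complex) (tp1: complex) (tp2: complex)

instantiation tp :: comm_ring_1
begin
definition zero_tp_def: "0 = TP 0 0 0"
definition one_tp_def: "1 = TP 1 0 0"
definition plus_tp_def: "x + y = TP (tp0 x + tp0 y) (tp1 x + tp1 y) (tp2 x + tp2 y)"
definition minus_tp_def: "x - y = TP (tp0 x - tp0 y) (tp1 x - tp1 y) (tp2 x - tp2 y)"
definition uminus_tp_def: "- x = TP (- tp0 x) (- tp1 x) (- tp2 x)"
definition times_tp_def: "x * y = TP (tp0 x * tp0 y) (tp0 x * tp1 y + tp1 x * tp0 y)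
   (tp0 x * tp2 y + tp1 x * tp1 y + tp2 x * tp0 y)"
instance
  by intro_classes (auto simp: zero_tp_def one_tp_def plus_tp_def minus_tp_def uminus_tp_def
      times_tp_def algebra_simps intro: tp.expand)
end

lemma tp_simps[simp]:
  "TP a b c + TP a' b' c' = TP (a + a') (b + b') (c + c')"
  "TP a b c - TP a' b' c' = TP (a - a') (b - b') (c - c')"
  "- TP a b c = TP (- a) (- b) (- c)"
  "TP a b c * TP a' b' c' = TP (a * a') (a * b' + b * a') (a * c' + b * b' + c * a')"
  by (simp_all add: plus_tp_def minus_tp_def uminus_tp_def times_tp_def)

lemma tp_zero_one: "(0::tp) = TP 0 0 0" "(1::tp) = TP 1 0 0"
  by (simp_all add: zero_tp_def one_tp_def)

lemma tp0_add[simp]: "tp0 (x + y) = tp0 x + tp0 y" and tp0_mult[simp]: "tp0 (x * y) = tp0 x * tp0 y"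
  and tp1_add[simp]: "tp1 (x + y) = tp1 x + tp1 y" and tp2_add[simp]: "tp2 (x + y) = tp2 x + tp2 y"
  and tp0_minus[simp]: "tp0 (x - y) = tp0 x - tp0 y" and tp1_minus[simp]: "tp1 (x - y) = tp1 x - tp1 y"
  and tp2_minus[simp]: "tp2 (x - y) = tp2 x - tp2 y"
  by (simp_all add: plus_tp_def times_tp_def minus_tp_def)

lemma tp1_mult: "tp1 (x * y) = tp0 x * tp1 y + tp1 x * tp0 y" by (simp add: times_tp_def)
lemma tp2_mult: "tp2 (x * y) = tp0 x * tp2 y + tp1 x * tp1 y + tp2 x * tp0 y" by (simp add: times_tp_def)

lemma tp_pow: "TP x 0 z ^ n = TP (x ^ n) 0 (of_nat n * x ^ (n - 1) * z)"
proof (induction n)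
  case 0 then show ?case by (simp add: tp_zero_one)
next
  case (Suc n) then show ?case by (cases n) (auto simp: algebra_simps tp_zero_one)
qed

definition mk2 :: "'a::zero \<Rightarrow> 'a \<Rightarrow> 'a \<Rightarrow> 'a \<Rightarrow> 'a^2^2" where
  "mk2 a b c d = vector [vector [a, b], vector [c, d]]"

lemma mk2_nth[simp]: "mk2 a b c d $ 1 $ 1 = a" "mk2 a b c d $ 1 $ 2 = b"
  "mk2 a b c d $ 2 $ 1 = c" "mk2 a b c d $ 2 $ 2 = d"
  by (simp_all add: mk2_def)

lemma mk2_eta: "X = mk2 (X$1$1) (X$1$2) (X$2$1) (X$2$2)"
  by (simp add: vec_eq_iff forall_2)

lemma mk2_eq[simp]: "mk2 a b c d = mk2 a' b' c' d' \<longleftrightarrow> a = a' \<and> b = b' \<and> c = c' \<and> d = d'"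
  by (metis mk2_nth)

lemma mk2_mult[simp]: "(mk2 a b c d :: 'a::semiring_1^2^2) ** mk2 a' b' c' d' =
   mk2 (a * a' + b * c') (a * b' + b * d') (c * a' + d * c') (c * b' + d * d')"
  by (simp add: vec_eq_iff forall_2 matrix_matrix_mult_def sum_2)

lemma mk2_one: "(mat 1 :: 'a::semiring_1^2^2) = mk2 1 0 0 1"
  by (simp add: vec_eq_iff forall_2 mat_def)

lemma mk2_trace[simp]: "trace (mk2 a b c d :: 'a::semiring_1^2^2) = a + d"
  by (simp add: trace_def sum_2)

lemma mk2_det[simp]: "det (mk2 a b c d :: 'a::comm_ring_1^2^2) = a * d - b * c"
  by (simp add: det_2)

definition adj2 :: "'a::comm_ring_1^2^2 \<Rightarrow> 'a^2^2" where
  "adj2 X = mk2 (X$2$2) (- X$1$2) (- X$2$1) (X$1$1)"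

lemma adj2_mk2[simp]: "adj2 (mk2 a b c d) = mk2 d (- b) (- c) a"
  by (simp add: adj2_def)

lemma mk2_cases: obtains a b c d where "X = mk2 a b c d" using mk2_eta by blast

lemma adj2_adj2[simp]: "adj2 (adj2 X) = X"
  by (cases X rule: mk2_cases) simp

lemma adj2_mult: "adj2 (X ** Y) = adj2 Y ** adj2 X"
  by (cases X rule: mk2_cases, cases Y rule: mk2_cases) (simp add: algebra_simps)

lemma adj2_one[simp]: "adj2 (mat 1) = mat 1"
  by (simp add: mk2_one)

lemma trace_adj2: "trace (X ** adj2 Y) = trace X * trace Y - trace (X ** Y)"
  by (cases X rule: mk2_cases, cases Y rule: mk2_cases) (simp add: algebra_simps)

lemma mult_adj2: "X ** adj2 X = mk2 (det X) 0 0 (det X)"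
  by (cases X rule: mk2_cases) (simp add: algebra_simps)

lemma adj2_mult_self: "adj2 X ** X = mk2 (det X) 0 0 (det X)"
  by (cases X rule: mk2_cases) (simp add: algebra_simps)

lemma det1_inv: "det X = 1 \<Longrightarrow> X ** adj2 X = mat 1 \<and> adj2 X ** X = mat 1"
  by (simp add: mult_adj2 adj2_mult_self mk2_one)

lemma chiL_nil[simp]: "chiL lam [] = 2" by (simp add: chiL_def)

lemma chiL_gp: "chiL lam (gp g n @ v) = lamw lam g ^ n * lamw lam v + inverse (lamw lam g ^ n * lamw lam v)"
  by (simp add: chiL_def)

lemma alg_pow:
  fixes m d f0 f1 f2 :: complex
  assumes m: "m \<noteq> 0"
    and h1: "(m - inverse m) * f1 = of_nat (Suc n) * (m ^ Suc n - inverse m ^ Suc n) * d"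
    and h0: "(m - inverse m) * f0 = of_nat n * (m ^ n - inverse m ^ n) * d"
    and h2: "f2 = (m + inverse m) * f1 + d * (m ^ Suc n + inverse (m ^ Suc n)) - f0"
  shows "(m - inverse m) * f2 = of_nat (Suc (Suc n)) * (m ^ Suc (Suc n) - inverse m ^ Suc (Suc n)) * d"
proof -
  define i where "i = inverse m"
  define X where "X = m ^ n"
  define Y where "Y = i ^ n"
  have mi: "m * i = 1" using m by (simp add: i_def)
  have e1: "inverse (m ^ Suc n) = i * Y" by (simp add: i_def Y_def power_inverse)
  have "(m - inverse m) * f2 = (m + inverse m) * ((m - inverse m) * f1) + (m - inverse m) * d * (m ^ Suc n + inverse (m ^ Suc n)) - (m - inverse m) * f0"
    by (subst h2) (simp add: algebra_simps)
  also have "\<dots> = (m + i) * (of_nat (Suc n) * (m * X - i * Y) * d) + (m - i) * d * (m * X + i * Y) - of_nat n * (X - Y) * d"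
    unfolding h1 h0 e1 by (simp add: i_def X_def Y_def power_inverse)
  also have "\<dots> = of_nat (Suc (Suc n)) * (m * (m * X) - i * (i * Y)) * d"
    using mi by (simp add: algebra_simps) algebra
  also have "\<dots> = of_nat (Suc (Suc n)) * (m ^ Suc (Suc n) - inverse m ^ Suc (Suc n)) * d"
    by (simp add: i_def X_def Y_def power_inverse)
  finally show ?thesis .
qed


lemma alg_hpow:
  fixes s d f0 f1 f2 :: complex
  assumes ss: "s * s = 1"
    and h1: "f1 = s ^ Suc (Suc n) * of_nat (Suc n) ^ 2 * d"
    and h0: "f0 = s ^ Suc n * of_nat n ^ 2 * d"
    and h2: "f2 = 2 * s * f1 + d * (2 * s ^ Suc n) - f0"
  shows "f2 = s ^ Suc (Suc (Suc n)) * of_nat (Suc (Suc n)) ^ 2 * d"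
proof -
  define X where "X = s ^ n"
  have "f2 = 2 * s * (s * s * X * (of_nat n + 1) ^ 2 * d) + d * (2 * s * X) - s * X * of_nat n ^ 2 * d"
    unfolding h2 h1 h0 by (simp add: X_def algebra_simps)
  also have "\<dots> = s * (s * s) * X * (of_nat n + 2) ^ 2 * d"
    using ss by (simp add: algebra_simps power2_eq_square)
  also have "\<dots> = s ^ Suc (Suc (Suc n)) * of_nat (Suc (Suc n)) ^ 2 * d"
    by (simp add: X_def algebra_simps)
  finally show ?thesis .
qed

locale tang =
  fixes R :: "word set" and lam :: "gen \<Rightarrow> complex" and D :: "word \<Rightarrow> complex"
  assumes lam_nz: "\<And>g. lam g \<noteq> 0"
    and resp: "\<And>u v. wequiv R u v \<Longrightarrow> D u = D v"
    and feq: "\<And>x y. D (x @ y) + D (x @ winv y) = chiL lam x * D y + D x * chiL lam y"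
    and cyc: "\<And>x y. D (x @ y) = D (y @ x)"
    and D0: "D [] = 0"
begin

abbreviation "L \<equiv> lamw lam"
abbreviation "chi \<equiv> chiL lam"

lemma L_nz: "L w \<noteq> 0" using lamw_nz lam_nz by blast

lemma D_winv: "D (winv y) = D y"
  using feq[of "[]" y] D0 by simp

lemma R1: "D (g @ g @ v) = chi g * D (g @ v) + D g * chi (g @ v) - D v"
proof -
  have "D (g @ winv (g @ v)) = D (winv g @ g @ winv v)"
    using cyc[of "g @ winv v" "winv g"] by simp
  also have "\<dots> = D (winv v)" by (rule resp[OF wequiv_cancel_inv])
  also have "\<dots> = D v" by (rule D_winv)
  finally have "D (g @ winv (g @ v)) = D v" .
  with feq[of g "g @ v"] show ?thesis by (simp add: algebra_simps)
qed

lemma Rn: "D (gp g (Suc (Suc n)) @ v) = chi g * D (gp g (Suc n) @ v) + D g * chi (gp g (Suc n) @ v) - D (gp g n @ v)"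
  using R1[of g "gp g n @ v"] by (simp add: gp_Suc)

lemma L_pow:
  "(L g - inverse (L g)) * D (gp g n) = of_nat n * (L g ^ n - inverse (L g) ^ n) * D g"
proof -
  have "(L g - inverse (L g)) * D (gp g n) = of_nat n * (L g ^ n - inverse (L g) ^ n) * D g \<and>
        (L g - inverse (L g)) * D (gp g (Suc n)) = of_nat (Suc n) * (L g ^ Suc n - inverse (L g) ^ Suc n) * D g"
  proof (induction n)
    case 0 then show ?case using D0 by (simp add: gp_Suc)
  next
    case (Suc n)
    have "D (gp g (Suc (Suc n))) = (L g + inverse (L g)) * D (gp g (Suc n)) + D g * (L g ^ Suc n + inverse (L g ^ Suc n)) - D (gp g n)"
      using Rn[of g n "[]"] by (simp add: chiL_def)
    with Suc alg_pow[OF L_nz] show ?case by blast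
  qed
  then show ?thesis by blast
qed

lemma L_hpow:
  assumes ss: "L g * L g = 1"
  shows "D (gp g n) = L g ^ Suc n * of_nat n ^ 2 * D g"
proof -
  have inv: "inverse (L g) = L g" using ss by (simp add: inverse_unique)
  have "D (gp g n) = L g ^ Suc n * of_nat n ^ 2 * D g \<and>
        D (gp g (Suc n)) = L g ^ Suc (Suc n) * of_nat (Suc n) ^ 2 * D g"
  proof (induction n)
    case 0 then show ?case using D0 ss by (simp add: gp_Suc)
  next
    case (Suc n)
    have "D (gp g (Suc (Suc n))) = 2 * L g * D (gp g (Suc n)) + D g * (2 * L g ^ Suc n) - D (gp g n)"
      using Rn[of g n "[]"] by (simp add: chiL_def inv power_inverse[symmetric] del: power_Suc)
    with Suc alg_hpow[OF ss] show ?case by blast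
  qed
  then show ?thesis by blast
qed

lemma L_hom:
  assumes Dg: "D g = 0"
  shows "(L g - inverse (L g)) * D (gp g n @ v) =
     (L g ^ n - inverse (L g) ^ n) * D (g @ v) - (L g ^ n * inverse (L g) - inverse (L g) ^ n * L g) * D v"
proof -
  define m where "m = L g"
  define i where "i = inverse m"
  have mi: "m * i = 1" using L_nz by (simp add: i_def m_def)
  have "(m - i) * D (gp g n @ v) = (m ^ n - i ^ n) * D (g @ v) - (m ^ n * i - i ^ n * m) * D v \<and>
        (m - i) * D (gp g (Suc n) @ v) = (m ^ Suc n - i ^ Suc n) * D (g @ v) - (m ^ Suc n * i - i ^ Suc n * m) * D v"
  proof (induction n)
    case 0 then show ?case using mi by (simp add: gp_Suc algebra_simps)
  next
    case (Suc n)
    have r: "D (gp g (Suc (Suc n)) @ v) = (m + i) * D (gp g (Suc n) @ v) - D (gp g n @ v)"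
      using Rn[of g n v] Dg by (simp add: chiL_def m_def i_def)
    define X where "X = m ^ n"
    define Y where "Y = i ^ n"
    have "(m - i) * D (gp g (Suc (Suc n)) @ v) = (m + i) * ((m - i) * D (gp g (Suc n) @ v)) - (m - i) * D (gp g n @ v)"
      unfolding r by (simp add: algebra_simps)
    also have "\<dots> = (m + i) * ((m * X - i * Y) * D (g @ v) - (m * X * i - i * Y * m) * D v) - ((X - Y) * D (g @ v) - (X * i - Y * m) * D v)"
      using Suc by (simp add: X_def Y_def)
    also have "\<dots> = (m * (m * X) - i * (i * Y)) * D (g @ v) - (m * (m * X) * i - i * (i * Y) * m) * D v"
      using mi by (simp add: algebra_simps) algebra
    finally show ?case using Suc by (simp add: X_def Y_def)
  qed
  then show ?thesis by (simp add: m_def i_def)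
qed

lemma L_h:
  assumes Dg: "D g = 0" and ss: "L g * L g = 1"
  shows "D (gp g n @ v) = L g ^ n * (D v + of_nat n * (L g * D (g @ v) - D v))"
proof -
  define s where "s = L g"
  have inv: "inverse s = s" using ss by (simp add: inverse_unique s_def)
  have "D (gp g n @ v) = s ^ n * (D v + of_nat n * (s * D (g @ v) - D v)) \<and>
        D (gp g (Suc n) @ v) = s ^ Suc n * (D v + of_nat (Suc n) * (s * D (g @ v) - D v))"
  proof (induction n)
    case 0 then show ?case using ss by (simp add: gp_Suc s_def algebra_simps)
  next
    case (Suc n)
    have r: "D (gp g (Suc (Suc n)) @ v) = 2 * s * D (gp g (Suc n) @ v) - D (gp g n @ v)"
      using Rn[of g n v] Dg by (simp add: chiL_def s_def[symmetric] inv)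
    define X where "X = s ^ n"
    have "D (gp g (Suc (Suc n)) @ v) = 2 * s * (s * X * (D v + (of_nat n + 1) * (s * D (g @ v) - D v))) - X * (D v + of_nat n * (s * D (g @ v) - D v))"
      unfolding r using Suc by (simp add: X_def)
    also have "\<dots> = s * (s * X) * (D v + (of_nat n + 2) * (s * D (g @ v) - D v))"
      using ss by (simp add: s_def[symmetric] algebra_simps) algebra
    finally show ?case using Suc by (simp add: X_def algebra_simps)
  qed
  then show ?thesis by (simp add: s_def)
qed

end

lemmas wequiv_trans[trans] = wequiv.trans

lemma wequiv_insert: "wequiv R (x @ y) (x @ [a, flip a] @ y)"
  by (rule wequiv.sym, rule wequiv.cancel)

lemma wequiv_congL: "wequiv R u v \<Longrightarrow> wequiv R (x @ u) (x @ v)"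
  using wequiv_cong[of R u v x "[]"] by simp

lemma wequiv_congR: "wequiv R u v \<Longrightarrow> wequiv R (u @ y) (v @ y)"
  using wequiv_cong[of R u v "[]" y] by simp

lemma comm_letter:
  assumes r: "wh @ [(g, False)] @ winv wh @ winv [(g, False)] \<in> R"
  shows "wequiv R ([(g, False)] @ wh) (wh @ [(g, False)])"
    and "wequiv R ([(g, True)] @ wh) (wh @ [(g, True)])"
proof -
  have "(wh @ [(g, False)]) @ winv ([(g, False)] @ wh) \<in> R" using r by (simp add: winv_def)
  then have e: "wequiv R (wh @ [(g, False)]) ([(g, False)] @ wh)" by (rule wequiv_rel_eq)
  then show e2: "wequiv R ([(g, False)] @ wh) (wh @ [(g, False)])" by (rule wequiv.sym)
  let ?c = "(g, False)" and ?ci = "(g, True)"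
  have f: "flip ?c = ?ci" "flip ?ci = ?c" by (simp_all add: flip_def)
  have "wequiv R ([?ci] @ wh) ([?ci] @ wh @ [?c, ?ci] @ [])"
    using wequiv_insert[of R "[?ci] @ wh" "[]" ?c] f by simp
  also have "wequiv R ([?ci] @ wh @ [?c, ?ci] @ []) ([?ci] @ ([?c] @ wh) @ [?ci])"
    using wequiv_cong[OF e, of "[?ci]" "[?ci]"] by simp
  also have "wequiv R ([?ci] @ ([?c] @ wh) @ [?ci]) ([] @ wh @ [?ci])"
    using wequiv.cancel[of R "[]" ?ci "wh @ [?ci]"] f by simp
  finally show "wequiv R ([?ci] @ wh) (wh @ [?ci])" by simp
qed


lemma central_letter:
  assumes c1: "wh @ wc1 @ winv wh @ winv wc1 \<in> R" and c2: "wh @ wc2 @ winv wh @ winv wc2 \<in> R"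
  shows "wequiv R ([l] @ wh) (wh @ [l])"
proof -
  obtain g b where l: "l = (g, b)" by (cases l)
  show ?thesis
  proof (cases g)
    case Gh
    show ?thesis
    proof (cases b)
      case True
      have "wequiv R ([] @ [(Gh, True), flip (Gh, True)] @ []) ([] @ [])" by (rule wequiv.cancel)
      moreover have "wequiv R ([] @ [(Gh, False), flip (Gh, False)] @ []) ([] @ [])" by (rule wequiv.cancel)
      ultimately show ?thesis using l Gh True by (auto simp: wh_def flip_def intro: wequiv.sym wequiv.trans)
    next
      case False then show ?thesis using l Gh by (simp add: wh_def wequiv.refl)
    qed
  next
    case Gc1
    then show ?thesis using comm_letter[of Gc1 R] c1 l by (cases b) (auto simp: wc1_def)
  next
    case Gc2
    then show ?thesis using comm_letter[of Gc2 R] c2 l by (cases b) (auto simp: wc2_def)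
  qed
qed

lemma central_word:
  assumes c1: "wh @ wc1 @ winv wh @ winv wc1 \<in> R" and c2: "wh @ wc2 @ winv wh @ winv wc2 \<in> R"
  shows "wequiv R (w @ wh) (wh @ w)"
proof (induction w)
  case Nil then show ?case by (simp add: wequiv.refl)
next
  case (Cons a w)
  have "wequiv R ([a] @ w @ wh) ([a] @ wh @ w)" using wequiv_congL[OF Cons, of "[a]"] by simp
  also have "wequiv R ([a] @ wh @ w) (wh @ [a] @ w)"
    using wequiv_congR[OF central_letter[OF c1 c2, of a]] by simp
  finally show ?case by simp
qed

lemma gp_comm2: "gp w n @ w @ u = w @ gp w n @ u"
  using gp_comm[of w n] by (metis append.assoc)

lemma central_gp:
  assumes c1: "wh @ wc1 @ winv wh @ winv wc1 \<in> R" and c2: "wh @ wc2 @ winv wh @ winv wc2 \<in> R"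
  shows "wequiv R (w @ gp wh k) (gp wh k @ w)"
proof (induction k)
  case 0 then show ?case by (simp add: wequiv.refl)
next
  case (Suc k)
  have "wequiv R (w @ gp wh k @ wh) (gp wh k @ w @ wh)" using wequiv_congR[OF Suc, of wh] by simp
  also have "wequiv R (gp wh k @ w @ wh) (gp wh k @ wh @ w)" using wequiv_congL[OF central_word[OF c1 c2]] by simp
  finally show ?case by (simp add: gp_Suc2 gp_comm2)
qed

definition pos :: "word \<Rightarrow> bool" where "pos w \<longleftrightarrow> (\<forall>l\<in>set w. \<not> snd l)"

lemma sort_h:
  assumes c1: "wh @ wc1 @ winv wh @ winv wc1 \<in> R" and c2: "wh @ wc2 @ winv wh @ winv wc2 \<in> R"
  shows "pos w \<Longrightarrow> wequiv R w (gp wh (length (filter (\<lambda>l. fst l = Gh) w)) @ filter (\<lambda>l. fst l \<noteq> Gh) w)"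
proof (induction w)
  case Nil then show ?case by (simp add: wequiv.refl)
next
  case (Cons a w)
  then have pw: "pos w" and na: "\<not> snd a" by (auto simp: pos_def)
  let ?k = "length (filter (\<lambda>l. fst l = Gh) w)" and ?w' = "filter (\<lambda>l. fst l \<noteq> Gh) w"
  have ih: "wequiv R ([a] @ w) ([a] @ gp wh ?k @ ?w')" using wequiv_congL[OF Cons.IH[OF pw], of "[a]"] by simp
  show ?case
  proof (cases "fst a = Gh")
    case True
    then have "a = (Gh, False)" using na by (cases a) auto
    then show ?thesis using ih True by (simp add: gp_Suc wh_def)
  next
    case False
    have "wequiv R ([a] @ gp wh ?k @ ?w') (gp wh ?k @ [a] @ ?w')"
      using wequiv_congR[OF central_gp[OF c1 c2, of "[a]" ?k], of ?w'] by simp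
    with ih False show ?thesis by (auto intro: wequiv.trans)
  qed
qed

locale tangc = tang +
  assumes comm1: "wh @ wc1 @ winv wh @ winv wc1 \<in> R" and comm2: "wh @ wc2 @ winv wh @ winv wc2 \<in> R"
begin

lemma D_central: "D (x @ wh @ y) = D (wh @ x @ y)"
  using resp[OF wequiv_congR[OF central_word[OF comm1 comm2, of x], of y]] by simp

lemma via_R1:
  assumes "D X = D (g @ g @ v)" "length (g @ g @ v) = length X" "g \<noteq> []"
    and IH: "\<And>u. length u < length X \<Longrightarrow> D u = 0"
  shows "D X = 0"
proof -
  have l: "length g < length X" "length (g @ v) < length X" "length v < length X"
    using assms(2,3) by (cases g; simp)+
  have "D g = 0" "D (g @ v) = 0" "D v = 0" using IH[OF l(1)] IH[OF l(2)] IH[OF l(3)] by auto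
  then show ?thesis using assms(1) R1[of g v] by simp
qed

end

context tangc begin

lemma hc_case:
  assumes H: "H = [] \<or> H = wh"
    and letters: "\<forall>l\<in>set w. l = (Gc1, False) \<or> l = (Gc2, False)"
    and IH: "\<And>u. length u < length (H @ w) \<Longrightarrow> D u = 0"
    and base: "D wh = 0" "D wc1 = 0" "D wc2 = 0" "D (wc1 @ wc2) = 0" "D (wh @ wc1) = 0"
      "D (wh @ wc2) = 0" "D (wh @ wc1 @ wc2) = 0"
  shows "D (H @ w) = 0"
proof -
  let ?a = "(Gc1, False)" and ?b = "(Gc2, False)"
  have cen: "D (x @ H @ y) = D (H @ x @ y)" for x y
    using H D_central by auto
  have b0: "D H = 0" "D (H @ [?a]) = 0" "D (H @ [?b]) = 0" "D (H @ [?a, ?b]) = 0"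
    using H base D0 by (auto simp: wh_def wc1_def wc2_def)
  have two: "x = y \<or> (x = ?a \<and> y = ?b) \<or> (x = ?b \<and> y = ?a)"
    if "x = ?a \<or> x = ?b" "y = ?a \<or> y = ?b" for x y using that by auto
  show ?thesis
  proof (cases w)
    case Nil then show ?thesis using b0 by simp
  next
    case (Cons x w1)
    note xl = letters[rule_format, of x]
    show ?thesis
    proof (cases w1)
      case Nil then show ?thesis using b0 Cons xl by auto
    next
      case (Cons y w2)
      note yl = letters[rule_format, of y]
      show ?thesis
      proof (cases w2)
        case Nil
        have wxy: "w = [x, y]" using Cons Nil \<open>w = x # w1\<close> by simp
        consider "x = y" | "x = ?a \<and> y = ?b" | "x = ?b \<and> y = ?a" using two[OF xl yl] wxy by auto
        then show ?thesis
        proof cases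
          case 1
          show ?thesis
            by (rule via_R1[of "H @ w" "[x]" "H"])
               (use wxy 1 IH cyc[of H "[x, x]"] in auto)
        next
          case 2 then show ?thesis using b0 wxy by simp
        next
          case 3
          have "D (H @ [?b, ?a]) = D ([?a] @ H @ [?b])" using cyc[of "H @ [?b]" "[?a]"] by simp
          also have "\<dots> = D (H @ [?a] @ [?b])" by (rule cen)
          finally show ?thesis using b0 wxy 3 by simp
        qed
      next
        case (Cons z r)
        note zl = letters[rule_format, of z]
        have wxyz: "w = x # y # z # r" using Cons \<open>w1 = y # w2\<close> \<open>w = x # w1\<close> by simp
        have xyz: "x = ?a \<or> x = ?b" "y = ?a \<or> y = ?b" "z = ?a \<or> z = ?b" using xl yl zl wxyz by auto
        show ?thesis
        proof (cases "x = y")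
          case True
          show ?thesis
            by (rule via_R1[of "H @ w" "[x]" "z # r @ H"])
               (use wxyz True IH cyc[of H "x # x # z # r"] in auto)
        next
          case xy: False
          show ?thesis
          proof (cases "y = z")
            case True
            show ?thesis
              by (rule via_R1[of "H @ w" "[y]" "r @ H @ [x]"])
                 (use wxyz True IH cyc[of "H @ [x]" "y # y # r"] in auto)
          next
            case yz: False
            have zx: "z = x" using xyz xy yz by auto
            show ?thesis
            proof (cases r)
              case Nil
              have "D (H @ w) = D ([x] @ H @ [x, y])" using cyc[of "H @ [x, y]" "[x]"] wxyz zx Nil by simp
              also have "\<dots> = D (H @ [x] @ [x, y])" by (rule cen)
              also have "\<dots> = D ([x] @ [x] @ [y] @ H)" using cyc[of H "[x, x, y]"] by simp
              finally have e: "D (H @ w) = D ([x] @ [x] @ [y] @ H)" .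
              show ?thesis
                by (rule via_R1[OF e]) (use wxyz Nil IH in auto)
            next
              case (Cons t r')
              have tl: "t = ?a \<or> t = ?b" using letters wxyz Cons by auto
              show ?thesis
              proof (cases "t = x")
                case True
                show ?thesis
                  by (rule via_R1[of "H @ w" "[x]" "r' @ H @ [x, y]"])
                     (use wxyz zx Cons True IH cyc[of "H @ [x, y]" "x # x # r'"] in auto)
              next
                case False
                have ty: "t = y" using tl xyz False xy by auto
                show ?thesis
                  by (rule via_R1[of "H @ w" "[x, y]" "r' @ H"])
                     (use wxyz zx Cons ty IH cyc[of H "x # y # x # y # r'"] in auto)
              qed
            qed
          qed
        qed
      qed
    qed
  qed
qed

lemma pos_case:
  assumes IH: "\<And>u. length u < length w \<Longrightarrow> D u = 0" and pw: "pos w"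
    and base: "D wh = 0" "D wc1 = 0" "D wc2 = 0" "D (wc1 @ wc2) = 0" "D (wh @ wc1) = 0"
      "D (wh @ wc2) = 0" "D (wh @ wc1 @ wc2) = 0"
  shows "D w = 0"
proof -
  define k where "k = length (filter (\<lambda>l. fst l = Gh) w)"
  define w' where "w' = filter (\<lambda>l. fst l \<noteq> Gh) w"
  have e: "D w = D (gp wh k @ w')"
    using resp[OF sort_h[OF comm1 comm2 pw]] by (simp add: k_def w'_def)
  have len: "length w = k + length w'"
    using sum_length_filter_compl[of "\<lambda>l. fst l = Gh" w] by (simp add: k_def w'_def)
  have lw: "length (gp wh k @ w') = length w" using len by (simp add: wh_def)
  show ?thesis
  proof (cases "k \<ge> 2")
    case True
    then obtain j where kj: "k = Suc (Suc j)" by (metis add_2_eq_Suc le_Suc_ex)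
    have "D w = D (wh @ wh @ (gp wh j @ w'))" using e kj by (simp add: gp_Suc)
    then show ?thesis
      by (rule via_R1) (use len kj IH in \<open>auto simp: wh_def\<close>)
  next
    case False
    then have "k = 0 \<or> k = 1" by auto
    then have H: "gp wh k = [] \<or> gp wh k = wh" by (auto simp: gp_Suc)
    have letters: "\<forall>l\<in>set w'. l = (Gc1, False) \<or> l = (Gc2, False)"
    proof
      fix l assume "l \<in> set w'"
      then have "fst l \<noteq> Gh" "\<not> snd l" using pw by (auto simp: w'_def pos_def)
      then show "l = (Gc1, False) \<or> l = (Gc2, False)" by (cases l; cases "fst l") auto
    qed
    have "D (gp wh k @ w') = 0"
      by (rule hc_case[OF H letters]) (use IH lw base in auto)
    then show ?thesis using e by simp
  qed
qed

lemma reduce: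
  assumes base: "D wh = 0" "D wc1 = 0" "D wc2 = 0" "D (wc1 @ wc2) = 0" "D (wh @ wc1) = 0"
      "D (wh @ wc2) = 0" "D (wh @ wc1 @ wc2) = 0"
  shows "D w = 0"
proof -
  have "\<forall>w::word. length w = n \<longrightarrow> D w = 0" for n
  proof (induction n rule: less_induct)
    case (less n)
    have "\<forall>w::word. length w = n \<longrightarrow> length (filter snd w) = k \<longrightarrow> D w = 0" for k
    proof (induction k)
      case 0
      show ?case
      proof (intro allI impI)
        fix w :: word assume "length w = n" "length (filter snd w) = 0"
        then have "pos w" by (auto simp: pos_def filter_empty_conv)
        then show "D w = 0" using pos_case less base \<open>length w = n\<close> by blast
      qed
    next
      case (Suc k)
      show ?case
      proof (intro allI impI)
        fix w :: word assume lw: "length w = n" and cw: "length (filter snd w) = Suc k"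
        then obtain l where l: "l \<in> set w" "snd l"
          by (metis length_0_conv filter_empty_conv nat.distinct(1))
        then obtain u v where w: "w = u @ l # v" by (meson split_list)
        obtain g where lg: "l = (g, True)" using l(2) by (metis prod.collapse)
        have d1: "D w = D (v @ u @ [l])" using cyc[of "u @ [l]" v] w by simp
        have f: "D ((v @ u) @ [(g, False)]) + D ((v @ u) @ winv [(g, False)]) =
                 chi (v @ u) * D [(g, False)] + D (v @ u) * chi [(g, False)]" by (rule feq)
        have wi: "winv [(g, False)] = [(g, True)]" by (simp add: winv_def flip_def)
        have dg: "D [(g, False)] = 0" using base by (cases g) (auto simp: wh_def wc1_def wc2_def)
        have dvu: "D (v @ u) = 0" using less[of "length (v @ u)"] lw w by auto
        have "D (v @ u @ [(g, False)]) = D (u @ [(g, False)] @ v)" using cyc[of "u @ [(g, False)]" v] by simp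
        also have "\<dots> = 0" using Suc[rule_format, of "u @ [(g, False)] @ v"] lw cw w lg by auto
        finally show "D w = 0" using d1 f wi dg dvu lg by simp
      qed
    qed
    then show ?case by blast
  qed
  then show ?thesis by blast
qed

end

context tang begin

lemma inv_sq1: "(x::complex) * x = 1 \<Longrightarrow> inverse x = x"
  by (simp add: inverse_unique)

lemma pow_vanish:
  assumes "L c ^ n = \<sigma>" "\<sigma> * \<sigma> = 1" "L c * L c \<noteq> 1"
  shows "D (gp c n) = 0"
proof -
  have nz: "L c - inverse (L c) \<noteq> 0"
    using assms(3) L_nz[of c] by (auto simp: field_simps)
  have "inverse (L c) ^ n = \<sigma>" using assms(1,2) by (simp add: power_inverse inv_sq1)
  then have "(L c - inverse (L c)) * D (gp c n) = 0" using L_pow[of c n] assms(1) by simp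
  then show ?thesis using nz by simp
qed

lemma pow_succ:
  assumes "L c ^ n = \<sigma>" "\<sigma> * \<sigma> = 1" "L c * L c \<noteq> 1"
  shows "D (gp c (Suc n)) = of_nat (Suc n) * \<sigma> * D c"
proof -
  have nz: "L c - inverse (L c) \<noteq> 0"
    using assms(3) L_nz[of c] by (auto simp: field_simps)
  have i: "inverse (L c) ^ n = \<sigma>" using assms(1,2) by (simp add: power_inverse inv_sq1)
  have "(L c - inverse (L c)) * D (gp c (Suc n)) = of_nat (Suc n) * (L c * \<sigma> - inverse (L c) * \<sigma>) * D c"
    using L_pow[of c "Suc n"] assms(1) i by simp
  also have "\<dots> = (L c - inverse (L c)) * (of_nat (Suc n) * \<sigma> * D c)" by (simp add: algebra_simps)
  finally show ?thesis using nz by simp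
qed

lemma hom_p:
  assumes "D c = 0" "L c ^ n = \<sigma>" "\<sigma> * \<sigma> = 1" "L c * L c \<noteq> 1"
  shows "D (gp c n @ v) = \<sigma> * D v"
proof -
  have nz: "L c - inverse (L c) \<noteq> 0"
    using assms(4) L_nz[of c] by (auto simp: field_simps)
  have i: "inverse (L c) ^ n = \<sigma>" using assms(2,3) by (simp add: power_inverse inv_sq1)
  have "(L c - inverse (L c)) * D (gp c n @ v) = - (\<sigma> * inverse (L c) - \<sigma> * L c) * D v"
    using L_hom[OF assms(1), of n v] assms(2) i by (simp add: algebra_simps)
  also have "\<dots> = (L c - inverse (L c)) * (\<sigma> * D v)" by (simp add: algebra_simps)
  finally show ?thesis using nz by simp
qed

lemma hpow0:
  assumes ss: "L wh * L wh = 1"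
  shows "D (wpow wh q) = L wh ^ Suc (nat \<bar>q\<bar>) * of_nat (nat \<bar>q\<bar>) ^ 2 * D wh"
proof (cases "q \<ge> 0")
  case True
  then show ?thesis using L_hpow[OF ss, of "nat q"] by (simp add: wpow_nonneg)
next
  case False
  have ss': "L (winv wh) * L (winv wh) = 1" using ss by (simp add: inv_sq1)
  have "L (winv wh) = L wh" using ss by (simp add: inv_sq1)
  then show ?thesis using False L_hpow[OF ss', of "nat (-q)"] by (simp add: wpow_neg D_winv)
qed

lemma hpow_val:
  assumes ss: "L wh * L wh = 1" and Dh: "D wh = 0"
  shows "D (wpow wh q @ v) = L wh ^ nat \<bar>q\<bar> * (D v + of_int q * (L wh * D (wh @ v) - D v))"
proof (cases "q \<ge> 0")
  case True
  then show ?thesis using L_h[OF Dh ss, of "nat q" v] by (simp add: wpow_nonneg)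
next
  case False
  define s where "s = L wh"
  have inv: "inverse s = s" using ss by (simp add: inv_sq1 s_def)
  have ss': "L (winv wh) * L (winv wh) = 1" using ss by (simp add: inv_sq1)
  have Lw: "L (winv wh) = s" using inv by (simp add: s_def)
  have Dw: "D (winv wh) = 0" using Dh by (simp add: D_winv)
  have "D (v @ wh) + D (v @ winv wh) = D v * (s + inverse s)"
    using feq[of v wh] Dh by (simp add: chiL_def s_def wh_def)
  then have f: "D (winv wh @ v) = 2 * s * D v - D (wh @ v)"
    using cyc[of v wh] cyc[of v "winv wh"] inv by (simp add: algebra_simps)
  have "D (wpow wh q @ v) = s ^ nat (- q) * (D v + of_nat (nat (- q)) * (s * D (winv wh @ v) - D v))"
    using L_h[OF Dw ss', of "nat (-q)" v] False Lw by (simp add: wpow_neg)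
  also have "\<dots> = s ^ nat \<bar>q\<bar> * (D v + of_int q * (s * D (wh @ v) - D v))"
    using False ss by (simp add: f s_def algebra_simps of_nat_nat)
  finally show ?thesis by (simp add: s_def)
qed

end

locale tangR = tang R lam D for R lam D +
  fixes p1 q1 p2 q2 p3 q3 :: int
  assumes Rdef: "R = relators p1 q1 p2 q2 p3 q3"
    and p: "p1 \<ge> 2" "p2 \<ge> 2" "p3 \<ge> 2" and q: "q1 \<noteq> 0" "q2 \<noteq> 0" "q3 \<noteq> 0"
    and ss: "lam Gh * lam Gh = 1"
    and a1: "lam Gc1 * lam Gc1 \<noteq> 1" and b1: "lam Gc2 * lam Gc2 \<noteq> 1"
    and ab1: "(lam Gc1 * lam Gc2) * (lam Gc1 * lam Gc2) \<noteq> 1"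
    and rl1: "lam Gc1 ^ nat p1 = lam Gh ^ nat \<bar>q1\<bar>"
    and rl2: "lam Gc2 ^ nat p2 = lam Gh ^ nat \<bar>q2\<bar>"
    and rl3: "(lam Gc1 * lam Gc2) ^ nat p3 = lam Gh ^ nat \<bar>q3\<bar>"
begin

sublocale tangc
  by unfold_locales (simp_all add: Rdef relators_def)

lemma Lwh: "L wh = lam Gh" by (simp add: wh_def)
lemma Lwc1: "L wc1 = lam Gc1" by (simp add: wc1_def)
lemma Lwc2: "L wc2 = lam Gc2" by (simp add: wc2_def)
lemma Lwc3: "L wc3 = lam Gc1 * lam Gc2" by (simp add: wc3_def wc1_def wc2_def)

lemma ssL: "L wh * L wh = 1" using ss by (simp add: Lwh)

lemma sig: "(lam Gh ^ k) * (lam Gh ^ k) = 1"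
  using ss by (metis power_mult_distrib power_one)

lemma rel_gen:
  assumes "c @ winv t \<in> R"
  shows "D (c @ v) = D (t @ v)"
  using resp[OF wequiv_congR[OF wequiv_rel_eq[OF assms]]] .

lemma rel1: "D (gp wc1 (nat p1) @ v) = D (wpow wh q1 @ v)"
proof -
  have "gp wc1 (nat p1) @ winv (wpow wh q1) \<in> R"
    using p by (simp add: Rdef relators_def wpow_uminus[symmetric] wpow_nonneg)
  then show ?thesis by (rule rel_gen)
qed

lemma rel2: "D (gp wc2 (nat p2) @ v) = D (wpow wh q2 @ v)"
proof -
  have "gp wc2 (nat p2) @ winv (wpow wh q2) \<in> R"
    using p by (simp add: Rdef relators_def wpow_uminus[symmetric] wpow_nonneg)
  then show ?thesis by (rule rel_gen)
qed

lemma rel3: "D (gp wc3 (nat p3) @ v) = D (wpow wh q3 @ v)"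
proof -
  have "gp wc3 (nat p3) @ winv (wpow wh q3) \<in> R"
    using p by (simp add: Rdef relators_def wpow_uminus[symmetric] wpow_nonneg)
  then show ?thesis by (rule rel_gen)
qed

lemma Dh0: "D wh = 0"
proof -
  have "D (gp wc1 (nat p1)) = 0"
    by (rule pow_vanish[OF _ sig a1[folded Lwc1]]) (simp add: Lwc1 rl1)
  then have "D (wpow wh q1) = 0" using rel1[of "[]"] by simp
  then have "L wh ^ Suc (nat \<bar>q1\<bar>) * of_nat (nat \<bar>q1\<bar>) ^ 2 * D wh = 0" using hpow0[OF ssL] by simp
  moreover have "L wh ^ Suc (nat \<bar>q1\<bar>) \<noteq> 0" using L_nz by simp
  moreover have "(of_nat (nat \<bar>q1\<bar>) :: complex) \<noteq> 0" using q by simp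
  ultimately show ?thesis by simp
qed

definition E where "E v = L wh * D (wh @ v) - D v"

lemma hval: "D (wpow wh q @ v) = L wh ^ nat \<bar>q\<bar> * (D v + of_int q * E v)"
  using hpow_val[OF ssL Dh0] by (simp add: E_def)

context
  assumes D3: "D wc3 = 0"
begin

lemma E0: "E v = 0"
proof -
  have "D (gp wc3 (nat p3) @ v) = lam Gh ^ nat \<bar>q3\<bar> * D v"
    by (rule hom_p[OF D3 _ sig ab1[folded Lwc3]]) (simp add: Lwc3 rl3)
  then have "lam Gh ^ nat \<bar>q3\<bar> * D v = lam Gh ^ nat \<bar>q3\<bar> * (D v + of_int q3 * E v)"
    using rel3[of v] hval[of q3 v] by (simp add: Lwh)
  moreover have "lam Gh ^ nat \<bar>q3\<bar> \<noteq> 0" using lam_nz[of Gh] by simp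
  ultimately show ?thesis using q by simp
qed

lemma Dc1: "D wc1 = 0"
proof -
  have "D (gp wc1 (Suc (nat p1))) = of_nat (Suc (nat p1)) * lam Gh ^ nat \<bar>q1\<bar> * D wc1"
    by (rule pow_succ[OF _ sig a1[folded Lwc1]]) (simp add: Lwc1 rl1)
  moreover have "D (gp wc1 (Suc (nat p1))) = lam Gh ^ nat \<bar>q1\<bar> * D wc1"
    using rel1[of wc1] hval[of q1 wc1] E0 by (simp add: gp_Suc2 Lwh)
  ultimately have "lam Gh ^ nat \<bar>q1\<bar> * (of_nat (nat p1) * D wc1) = 0" by (simp add: algebra_simps)
  moreover have "lam Gh ^ nat \<bar>q1\<bar> \<noteq> 0" using lam_nz[of Gh] by simp
  ultimately have "of_nat (nat p1) * D wc1 = 0" using lam_nz[of Gh] by simp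
  then show ?thesis using p by simp
qed

lemma Dc2: "D wc2 = 0"
proof -
  have "D (gp wc2 (Suc (nat p2))) = of_nat (Suc (nat p2)) * lam Gh ^ nat \<bar>q2\<bar> * D wc2"
    by (rule pow_succ[OF _ sig b1[folded Lwc2]]) (simp add: Lwc2 rl2)
  moreover have "D (gp wc2 (Suc (nat p2))) = lam Gh ^ nat \<bar>q2\<bar> * D wc2"
    using rel2[of wc2] hval[of q2 wc2] E0 by (simp add: gp_Suc2 Lwh)
  ultimately have "lam Gh ^ nat \<bar>q2\<bar> * (of_nat (nat p2) * D wc2) = 0" by (simp add: algebra_simps)
  moreover have "lam Gh ^ nat \<bar>q2\<bar> \<noteq> 0" using lam_nz[of Gh] by simp
  ultimately have "of_nat (nat p2) * D wc2 = 0" using lam_nz[of Gh] by simp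
  then show ?thesis using p by simp
qed

lemma Dh_v: "D v = 0 \<Longrightarrow> D (wh @ v) = 0"
  using E0[of v] L_nz[of wh] by (simp add: E_def)

theorem D_zero: "D w = 0"
  by (rule reduce) (use Dh0 Dc1 Dc2 D3 Dh_v in \<open>auto simp: wc3_def\<close>)

end

end

fun teval :: "(gen \<Rightarrow> tp^2^2) \<Rightarrow> word \<Rightarrow> tp^2^2" where
  "teval G [] = mat 1"
| "teval G (l # w) = (if snd l then adj2 (G (fst l)) else G (fst l)) ** teval G w"

fun mpow :: "tp^2^2 \<Rightarrow> nat \<Rightarrow> tp^2^2" where
  "mpow X 0 = mat 1"
| "mpow X (Suc n) = X ** mpow X n"

lemma teval_append: "teval G (x @ y) = teval G x ** teval G y"
  by (induction x) (auto simp: matrix_mul_assoc)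

lemma teval_winv: "teval G (winv w) = adj2 (teval G w)"
proof (induction w)
  case Nil then show ?case by simp
next
  case (Cons l w)
  have "teval G [flip l] = adj2 (teval G [l])"
    by (simp add: flip_def mk2_one[symmetric] adj2_mult)
  then show ?case using Cons by (simp add: winv_Cons teval_append adj2_mult del: teval.simps(2)) (simp add: teval_append[of G "[l]" w, simplified] adj2_mult)
qed

lemma teval_gp: "teval G (gp w n) = mpow (teval G w) n"
  by (induction n) (auto simp: gp_Suc teval_append)

lemma teval_resp:
  assumes dets: "\<And>g. det (G g) = 1" and rels: "\<And>r. r \<in> R \<Longrightarrow> teval G r = mat 1"
  shows "wequiv R u v \<Longrightarrow> teval G u = teval G v"
proof (induction rule: wequiv.induct)
  case (refl u) then show ?case by simp
next
  case (sym u v) then show ?case by simp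
next
  case (trans u v w) then show ?case by simp
next
  case (cancel u a v)
  have "teval G [a, flip a] = mat 1"
    using det1_inv[OF dets[of "fst a"]] by (cases a) (auto simp: flip_def)
  then show ?case by (simp add: teval_append[of G u] teval_append[of G "[a, flip a]", simplified] matrix_mul_assoc[symmetric])
next
  case (rel r u v)
  then show ?case by (simp add: teval_append rels matrix_mul_assoc[symmetric])
qed

lemma mpow_conj:
  assumes "Q' ** Q = mat 1" "Q ** Q' = mat 1"
  shows "mpow (Q ** X ** Q') n = Q ** mpow X n ** Q'"
proof (induction n)
  case 0 then show ?case using assms by (simp add: matrix_mul_assoc)
next
  case (Suc n)
  have "Q ** X ** Q' ** (Q ** mpow X n ** Q') = Q ** X ** (Q' ** Q) ** mpow X n ** Q'"
    by (simp add: matrix_mul_assoc)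
  then show ?case using Suc assms by (simp add: matrix_mul_assoc)
qed

lemma mpow_diag: "mpow (mk2 x 0 0 y) n = mk2 (x ^ n) 0 0 (y ^ n)"
  by (induction n) (auto simp: mk2_one)

lemma tp_pow2: "TP x 0 (x * c) ^ n = TP (x ^ n) 0 (of_nat n * x ^ n * c)"
  by (induction n) (auto simp: algebra_simps tp_zero_one)

definition gd :: "complex \<Rightarrow> tp^2^2 \<Rightarrow> bool" where
  "gd l X \<longleftrightarrow> tp0 (X$1$1) = l \<and> tp0 (X$2$2) = inverse l \<and> tp1 (X$1$1) = 0 \<and> tp1 (X$2$2) = 0
     \<and> tp0 (X$1$2) = 0 \<and> tp0 (X$2$1) = 0"

lemma gd_mult: "gd l X \<Longrightarrow> gd m Y \<Longrightarrow> gd (l * m) (X ** Y)"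
  by (cases X rule: mk2_cases, cases Y rule: mk2_cases) (simp add: gd_def tp1_mult)

lemma gd_adj2: "gd l X \<Longrightarrow> gd (inverse l) (adj2 X)"
  by (cases X rule: mk2_cases) (simp add: gd_def minus_tp_def[of 0, symmetric] uminus_tp_def)

lemma gd_one: "gd 1 (mat 1)"
  unfolding gd_def mk2_one by (simp add: tp_zero_one)

lemma gd_teval:
  assumes "\<And>g. gd (lam g) (G g)"
  shows "gd (lamw lam w) (teval G w)"
proof (induction w)
  case Nil then show ?case by (simp add: gd_one)
next
  case (Cons l w)
  then show ?case using assms gd_adj2 gd_mult by auto
qed

lemma gd_trace: "gd l X \<Longrightarrow> tp0 (trace X) = l + inverse l \<and> tp1 (trace X) = 0"
  by (cases X rule: mk2_cases) (simp add: gd_def)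

locale exist =
  fixes lam :: "gen \<Rightarrow> complex" and p1 q1 p2 q2 p3 q3 :: int
  assumes lam_nz: "\<And>g. lam g \<noteq> 0"
    and p: "p1 \<ge> 2" "p2 \<ge> 2" "p3 \<ge> 2" and q: "q1 \<noteq> 0" "q2 \<noteq> 0" "q3 \<noteq> 0"
    and ss: "lam Gh * lam Gh = 1"
    and a1: "lam Gc1 * lam Gc1 \<noteq> 1" and b1: "lam Gc2 * lam Gc2 \<noteq> 1"
    and ab1: "(lam Gc1 * lam Gc2) * (lam Gc1 * lam Gc2) \<noteq> 1"
    and rl1: "lam Gc1 ^ nat p1 = lam Gh ^ nat \<bar>q1\<bar>"
    and rl2: "lam Gc2 ^ nat p2 = lam Gh ^ nat \<bar>q2\<bar>"
    and rl3: "(lam Gc1 * lam Gc2) ^ nat p3 = lam Gh ^ nat \<bar>q3\<bar>"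
    and euler: "of_int q3 / of_int p3 - of_int q1 / of_int p1 - of_int q2 / of_int p2 \<noteq> (0::complex)"
begin

definition "s = lam Gh"
definition "a = lam Gc1"
definition "b = lam Gc2"
definition "k1 = (of_int q1 / of_int p1 :: complex)"
definition "k2 = (of_int q2 / of_int p2 :: complex)"
definition "k3 = (of_int q3 / of_int p3 :: complex)"
definition "vv = (k3 - k1 - k2) * (a * b - inverse (a * b)) / ((inverse a - a) * (b - inverse b))"

definition "GA = mk2 (TP a 0 (a * k1)) (TP 0 (inverse a - a) 0) (TP 0 0 0) (TP (inverse a) 0 (- (k1 * inverse a)))"
definition "GB = mk2 (TP b 0 (b * k2)) (TP 0 0 0) (TP 0 (vv * (b - inverse b)) 0) (TP (inverse b) 0 (- (k2 * inverse b)))"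
definition "GH = mk2 (TP s 0 s) (TP 0 0 0) (TP 0 0 0) (TP s 0 (- s))"

definition "G g = (case g of Gh \<Rightarrow> GH | Gc1 \<Rightarrow> GA | Gc2 \<Rightarrow> GB)"

lemma mk2_one_tp: "(mat (TP 1 0 0) :: tp^2^2) = mk2 (TP 1 0 0) (TP 0 0 0) (TP 0 0 0) (TP 1 0 0)"
  by (simp add: vec_eq_iff forall_2 mat_def tp_zero_one)

lemma nz: "a \<noteq> 0" "b \<noteq> 0" "s \<noteq> 0" using lam_nz by (auto simp: a_def b_def s_def)

lemma nz2: "inverse a - a \<noteq> 0" "b - inverse b \<noteq> 0" "a * b - inverse (a * b) \<noteq> 0"
  using a1 b1 ab1 nz by (auto simp: a_def b_def field_simps)

lemma ss': "s * s = 1" using ss by (simp add: s_def)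

lemma dets: "det (G g) = 1"
  using nz ss' by (cases g) (auto simp: G_def GA_def GB_def GH_def tp_zero_one)

lemma mpow_GA: "mpow GA n = mk2 (TP (a ^ n) 0 (of_nat n * a ^ n * k1)) (TP 0 (inverse a ^ n - a ^ n) 0) (TP 0 0 0)
   (TP (inverse a ^ n) 0 (- (of_nat n * k1 * inverse a ^ n)))"
  by (induction n) (auto simp: GA_def mk2_one_tp tp_zero_one algebra_simps)

lemma mpow_GB: "mpow GB n = mk2 (TP (b ^ n) 0 (of_nat n * b ^ n * k2)) (TP 0 0 0) (TP 0 (vv * (b ^ n - inverse b ^ n)) 0)
   (TP (inverse b ^ n) 0 (- (of_nat n * k2 * inverse b ^ n)))"
  by (induction n) (auto simp: GB_def mk2_one_tp tp_zero_one algebra_simps)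

lemma mpow_GH: "mpow GH n = mk2 (TP (s ^ n) 0 (of_nat n * s ^ n)) (TP 0 0 0) (TP 0 0 0) (TP (s ^ n) 0 (- (of_nat n * s ^ n)))"
  by (induction n) (auto simp: GH_def mk2_one_tp tp_zero_one algebra_simps)

lemma mpow_GHi: "mpow (adj2 GH) n = mk2 (TP (s ^ n) 0 (- (of_nat n * s ^ n))) (TP 0 0 0) (TP 0 0 0) (TP (s ^ n) 0 (of_nat n * s ^ n))"
  by (induction n) (auto simp: GH_def mk2_one_tp tp_zero_one algebra_simps)

lemma teval_hpow: "teval G (wpow wh k) = mk2 (TP (s ^ nat \<bar>k\<bar>) 0 (of_int k * s ^ nat \<bar>k\<bar>)) (TP 0 0 0) (TP 0 0 0)
   (TP (s ^ nat \<bar>k\<bar>) 0 (- (of_int k * s ^ nat \<bar>k\<bar>)))"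
proof (cases "k \<ge> 0")
  case True
  have "teval G wh = GH" by (simp add: wh_def G_def)
  then show ?thesis using True by (simp add: wpow_nonneg teval_gp mpow_GH)
next
  case False
  have "teval G (winv wh) = adj2 GH" by (simp add: wh_def winv_def flip_def G_def)
  then show ?thesis using False by (simp add: wpow_neg teval_gp mpow_GHi)
qed

end

context exist begin

definition "mu = a * b"
definition "x12 = - ((inverse a - a) * inverse b) / (mu - inverse mu)"
definition "x21 = (vv * (b - inverse b) * inverse a) / (mu - inverse mu)"
definition "RR = mk2 (TP 1 0 0) (TP 0 x12 0) (TP 0 x21 0) (TP 1 0 0)"
definition "RR' = mk2 (TP 1 0 (x12 * x21)) (TP 0 (- x12) 0) (TP 0 (- x21) 0) (TP 1 0 (x12 * x21))"
definition "DD = mk2 (TP mu 0 (mu * k3)) 0 0 (TP (inverse mu) 0 (inverse mu * (- k3)))"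

lemma RR_inv: "RR' ** RR = mat 1" "RR ** RR' = mat 1"
  by (simp_all add: RR_def RR'_def mk2_one_tp tp_zero_one)

lemma M_eq: "GA ** GB = RR ** DD ** RR'"
proof -
  have m: "mu - inverse mu \<noteq> 0" using nz2 by (simp add: mu_def)
  have den: "(inverse a - a) * (b - inverse b) \<noteq> 0" using nz2 by simp
  have "vv * ((inverse a - a) * (b - inverse b)) = (k3 - k1 - k2) * (mu - inverse mu)"
    unfolding vv_def mu_def using den by simp
  then have v: "(inverse a - a) * vv * (b - inverse b) = (k3 - k1 - k2) * (mu - inverse mu)"
    by (simp add: algebra_simps)
  define ia ib im where "ia = inverse a" and "ib = inverse b" and "im = inverse mu"
  have mu: "mu = a * b" by (simp add: mu_def)
  have iab: "ia * ib = im" by (simp add: ia_def ib_def im_def mu_def)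
  define N12 N21 where "N12 = (ia - a) * ib" and "N21 = vv * (b - ib) * ia"
  have m': "mu - im \<noteq> 0" using m by (simp add: im_def)
  have x12': "x12 * (mu - im) = - N12" unfolding x12_def N12_def ia_def ib_def im_def using m by simp
  have x21': "x21 * (mu - im) = N21" unfolding x21_def N21_def ia_def ib_def im_def using m by simp
  have NN: "N12 * N21 = (k3 - k1 - k2) * (mu - im) * im"
    using v iab unfolding N12_def N21_def ia_def ib_def im_def by algebra
  have "(x12 * x21 * (mu - im)) * (mu - im) = - (N12 * N21)"
    using x12' x21' by algebra
  then have "(x12 * x21 * (mu - im)) * (mu - im) = (- (k3 - k1 - k2) * im) * (mu - im)"
    using NN by (simp add: algebra_simps)
  then have P: "x12 * x21 * (mu - im) = - (k3 - k1 - k2) * im" using m' by simp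
  have g2: "a * (b * k2) + a * k1 * b + (ia - a) * (vv * (b - ib)) = mu * (x12 * x21) + mu * k3 - x12 * im * x21"
    using P v mu unfolding ia_def ib_def im_def by algebra
  have g6: "- (ia * (k2 * ib)) - k1 * ia * ib = im * (x12 * x21) - k3 * im - x21 * mu * x12"
    using P iab by algebra
  have g3: "(ia - a) * ib = x12 * im - mu * x12" using x12' unfolding N12_def by algebra
  have g4: "ia * (vv * (b - ib)) = x21 * mu - im * x21" using x21' unfolding N21_def by algebra
  show ?thesis
    using g2 g3 g4 g6 iab mu
    by (simp add: GA_def GB_def RR_def RR'_def DD_def tp_zero_one ia_def ib_def im_def)
qed

end

context exist begin

lemma sig: "(s ^ k) * (s ^ k) = 1"
  using ss' by (metis power_mult_distrib power_one)

lemma inv_pow: "x ^ n = (\<sigma>::complex) \<Longrightarrow> \<sigma> * \<sigma> = 1 \<Longrightarrow> inverse x ^ n = \<sigma>"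
  by (simp add: power_inverse inverse_unique)

lemma ss2: "s * (s * x) = x" using ss' by (metis mult.assoc mult_1)

lemma rel_comm1: "teval G (wh @ wc1 @ winv wh @ winv wc1) = mat 1"
  using nz ss'
  by (simp add: wh_def wc1_def winv_def flip_def G_def GH_def GA_def tp_zero_one mk2_one_tp algebra_simps ss2)

lemma rel_comm2: "teval G (wh @ wc2 @ winv wh @ winv wc2) = mat 1"
  using nz ss'
  by (simp add: wh_def wc2_def winv_def flip_def G_def GH_def GB_def tp_zero_one mk2_one_tp algebra_simps ss2)

lemma rel_pow1: "teval G (wpow wc1 p1 @ wpow wh (- q1)) = mat 1"
proof -
  define n where "n = nat p1"
  define \<sigma> where "\<sigma> = s ^ nat \<bar>q1\<bar>"
  have A: "a ^ n = \<sigma>" using rl1 by (simp add: a_def s_def n_def \<sigma>_def)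
  have ss1: "\<sigma> * \<sigma> = 1" using sig by (simp add: \<sigma>_def)
  have B: "inverse a ^ n = \<sigma>" by (rule inv_pow[OF A ss1])
  have C: "of_nat n * k1 = of_int q1" using p by (simp add: n_def k1_def)
  have t1: "teval G (wpow wc1 p1) = mpow GA n"
    using p by (simp add: wpow_nonneg teval_gp n_def wc1_def G_def)
  have e1: "of_nat n * \<sigma> * k1 = \<sigma> * of_int q1" "of_nat n * k1 * \<sigma> = \<sigma> * of_int q1" using C by (simp_all add: algebra_simps)
  show ?thesis
    unfolding teval_append t1 mpow_GA teval_hpow A B e1
    using ss1 by (simp add: \<sigma>_def tp_zero_one mk2_one_tp algebra_simps)
qed

lemma rel_pow2: "teval G (wpow wc2 p2 @ wpow wh (- q2)) = mat 1"
proof -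
  define n where "n = nat p2"
  define \<sigma> where "\<sigma> = s ^ nat \<bar>q2\<bar>"
  have A: "b ^ n = \<sigma>" using rl2 by (simp add: b_def s_def n_def \<sigma>_def)
  have ss1: "\<sigma> * \<sigma> = 1" using sig by (simp add: \<sigma>_def)
  have B: "inverse b ^ n = \<sigma>" by (rule inv_pow[OF A ss1])
  have C: "of_nat n * k2 = of_int q2" using p by (simp add: n_def k2_def)
  have t1: "teval G (wpow wc2 p2) = mpow GB n"
    using p by (simp add: wpow_nonneg teval_gp n_def wc2_def G_def)
  have e1: "of_nat n * \<sigma> * k2 = \<sigma> * of_int q2" "of_nat n * k2 * \<sigma> = \<sigma> * of_int q2" using C by (simp_all add: algebra_simps)
  show ?thesis
    unfolding teval_append t1 mpow_GB teval_hpow A B e1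
    using ss1 by (simp add: \<sigma>_def tp_zero_one mk2_one_tp algebra_simps)
qed

lemma rel_pow3: "teval G (wpow wc3 p3 @ wpow wh (- q3)) = mat 1"
proof -
  define n where "n = nat p3"
  define \<sigma> where "\<sigma> = s ^ nat \<bar>q3\<bar>"
  have A: "mu ^ n = \<sigma>" using rl3 by (simp add: a_def b_def mu_def s_def n_def \<sigma>_def)
  have ss1: "\<sigma> * \<sigma> = 1" using sig by (simp add: \<sigma>_def)
  have B: "inverse mu ^ n = \<sigma>" by (rule inv_pow[OF A ss1])
  have C: "of_nat n * k3 = of_int q3" using p by (simp add: n_def k3_def)
  have t0: "teval G wc3 = GA ** GB" by (simp add: wc3_def wc1_def wc2_def G_def)
  have t1: "teval G (wpow wc3 p3) = RR ** mpow DD n ** RR'"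
    using p by (simp add: wpow_nonneg teval_gp n_def t0 M_eq mpow_conj[OF RR_inv] matrix_mul_assoc)
  have D: "mpow DD n = mk2 (TP \<sigma> 0 (\<sigma> * of_int q3)) 0 0 (TP \<sigma> 0 (- (\<sigma> * of_int q3)))"
    unfolding DD_def mpow_diag tp_pow2 A B using C by (simp add: algebra_simps)
  show ?thesis
    unfolding teval_append t1 D teval_hpow
    using ss1 by (simp add: \<sigma>_def RR_def RR'_def tp_zero_one mk2_one_tp algebra_simps)
qed

lemma teval_rels: "r \<in> relators p1 q1 p2 q2 p3 q3 \<Longrightarrow> teval G r = mat 1"
  using rel_comm1 rel_comm2 rel_pow1 rel_pow2 rel_pow3 by (auto simp: relators_def)

end

context exist begin

definition "d0 w = tp2 (trace (teval G w))"

lemma gdG: "gd (lam g) (G g)"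
  using ss' nz by (cases g) (auto simp: gd_def G_def GA_def GB_def GH_def a_def b_def s_def inverse_unique)

lemma tr_teval: "tp0 (trace (teval G w)) = chiL lam w" "tp1 (trace (teval G w)) = 0"
  using gd_trace[OF gd_teval[OF gdG]] by (auto simp: chiL_def)

lemma d0_tangent: "d0 \<in> char_tangent (relators p1 q1 p2 q2 p3 q3) (chiL lam)"
proof -
  have resp: "respects_pi1 (relators p1 q1 p2 q2 p3 q3) d0"
    unfolding respects_pi1_def d0_def
    using teval_resp[OF dets teval_rels] by metis
  have feq: "d0 (x @ y) + d0 (x @ winv y) = chiL lam x * d0 y + d0 x * chiL lam y" for x y
  proof -
    have "trace (teval G (x @ y)) + trace (teval G (x @ winv y)) = trace (teval G x) * trace (teval G y)"
      by (simp add: teval_append teval_winv trace_adj2)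
    then have "tp2 (trace (teval G (x @ y))) + tp2 (trace (teval G (x @ winv y))) = tp2 (trace (teval G x) * trace (teval G y))"
      by (metis tp2_add)
    then show ?thesis by (simp add: d0_def tp2_mult tr_teval)
  qed
  have cyc: "d0 (x @ y) = d0 (y @ x)" for x y
    unfolding d0_def teval_append using trace_mul_sym by metis
  have z: "d0 [] = 0" by (simp add: d0_def mk2_one_tp tp_zero_one)
  show ?thesis using resp feq cyc z by (simp add: char_tangent_def)
qed

lemma d0_nz: "d0 wc1 \<noteq> 0"
proof -
  have "teval G wc1 = GA" by (simp add: wc1_def G_def)
  then have "d0 wc1 = a * k1 - k1 * inverse a"
    by (simp add: d0_def GA_def)
  then have "d0 wc1 = k1 * (a - inverse a)" by (simp add: algebra_simps)
  moreover have "k1 \<noteq> 0" using p q by (simp add: k1_def)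
  moreover have "a - inverse a \<noteq> 0" using nz2 by simp
  ultimately show ?thesis by simp
qed

end

type_synonym cm = "complex^2^2"

lemma sq1: "(x::complex) * x = 1 \<Longrightarrow> x = 1 \<or> x = -1"
proof -
  assume h: "x * x = 1"
  have "(x - 1) * (x + 1) = 0" using h by (simp add: algebra_simps)
  then have "x - 1 = 0 \<or> x + 1 = 0" by simp
  then show ?thesis
  proof
    assume "x - 1 = 0" then show ?thesis by simp
  next
    assume e: "x + 1 = 0"
    have "x = (x + 1) - 1" by simp
    then show ?thesis using e by simp
  qed
qed

lemma minv_adj:
  fixes X :: cm
  assumes "det X = 1"
  shows "matrix_inv X = adj2 X"
proof -
  have h: "X ** adj2 X = mat 1 \<and> adj2 X ** X = mat 1" using det1_inv[OF assms] .
  let ?A = "matrix_inv X"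
  have "X ** ?A = mat 1 \<and> ?A ** X = mat 1"
    unfolding matrix_inv_def by (rule someI_ex) (use h in blast)
  then have "?A = ?A ** (X ** adj2 X)" using h by simp
  also have "\<dots> = adj2 X" using \<open>X ** ?A = mat 1 \<and> ?A ** X = mat 1\<close> by (simp add: matrix_mul_assoc)
  finally show ?thesis .
qed

definition smul2 :: "complex \<Rightarrow> cm \<Rightarrow> cm" where
  "smul2 k X = mk2 (k * X$1$1) (k * X$1$2) (k * X$2$1) (k * X$2$2)"

lemma smul2_mult: "smul2 k X ** Y = smul2 k (X ** Y)"
  by (cases X rule: mk2_cases, cases Y rule: mk2_cases) (simp add: smul2_def algebra_simps)

lemma smul2_mk2: "smul2 k (mk2 x y z t) = mk2 (k * x) (k * y) (k * z) (k * t)"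
  by (simp add: smul2_def)

lemma inv_of_det:
  fixes P :: cm
  assumes "det P \<noteq> 0"
  shows "smul2 (inverse (det P)) (adj2 P) ** P = mat 1" "P ** smul2 (inverse (det P)) (adj2 P) = mat 1"
proof -
  obtain x y z t where P: "P = mk2 x y z t" by (rule mk2_cases)
  define D where "D = det P"
  have d: "D \<noteq> 0" "x * t - y * z = D" using assms P by (simp_all add: D_def)
  have "smul2 (inverse D) (adj2 P) ** P = smul2 (inverse D) (mk2 D 0 0 D)"
    unfolding smul2_mult P using d by (simp add: algebra_simps)
  also have "\<dots> = mat 1" using d by (simp add: smul2_mk2 mk2_one)
  finally show "smul2 (inverse (det P)) (adj2 P) ** P = mat 1" by (simp add: D_def)
  have "P ** smul2 (inverse D) (adj2 P) = mk2 (inverse D * (x * t - y * z)) 0 0 (inverse D * (x * t - y * z))"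
    unfolding P by (simp add: smul2_def algebra_simps)
  also have "\<dots> = mat 1" using d by (simp add: mk2_one)
  finally show "P ** smul2 (inverse (det P)) (adj2 P) = mat 1" by (simp add: D_def)
qed

lemma eigen_exists:
  fixes C :: cm
  assumes d: "det C = 1" and t: "trace C \<noteq> 2" "trace C \<noteq> -2"
  shows "\<exists>P P' x y. P' ** P = mat 1 \<and> P ** P' = mat 1 \<and> P' ** C ** P = mk2 x 0 0 y \<and> x \<noteq> y"
proof -
  obtain al be ga de where C: "C = mk2 al be ga de" by (rule mk2_cases)
  define \<tau> where "\<tau> = al + de"
  have dC: "al * de - be * ga = 1" using d C by simp
  have t2: "\<tau> \<noteq> 2" "\<tau> \<noteq> -2" using t C by (simp_all add: \<tau>_def)
  define a where "a = (\<tau> + csqrt (\<tau>\<^sup>2 - 4)) / 2"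
  define a' where "a' = \<tau> - a"
  define r where "r = csqrt (\<tau>\<^sup>2 - 4)"
  have r2: "r * r = \<tau> * \<tau> - 4" unfolding r_def using power2_csqrt[of "\<tau>\<^sup>2 - 4"]
    by (simp add: power2_eq_square)
  have a2: "a = (\<tau> + r) / 2" "a' = (\<tau> - r) / 2" by (simp_all add: a_def a'_def r_def field_simps)
  have "a * a' = (\<tau> * \<tau> - r * r) / 4" unfolding a2 by (simp add: field_simps)
  then have aa: "a * a' = 1" using r2 by simp
  have ne: "a \<noteq> a'"
  proof
    assume "a = a'"
    then have "a * a = 1" "\<tau> = 2 * a" using aa by (auto simp: a'_def)
    then have "a = 1 \<or> a = -1" by (intro sq1)
    then show False using t2 \<open>\<tau> = 2 * a\<close> by auto
  qed
  have ev: "a * a = \<tau> * a - 1" using aa by (simp add: a'_def algebra_simps)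
  have ev': "a' * a' = \<tau> * a' - 1" using aa by (simp add: a'_def algebra_simps)
  have key: "\<exists>P. det P \<noteq> 0 \<and> adj2 P ** C ** P = mk2 (a * det P) 0 0 (a' * det P)"
  proof -
    consider (b) "be \<noteq> 0" | (g) "be = 0" "ga \<noteq> 0" | (z) "be = 0" "ga = 0" by blast
    then show ?thesis
    proof cases
      case b
      define P where "P = mk2 be be (a - al) (a' - al)"
      have dP: "det P = be * (a' - a)" by (simp add: P_def algebra_simps)
      have dnz: "det P \<noteq> 0" using dP b ne by simp
      have e1: "(a' - al) * (al * be + be * (a - al)) - be * (ga * be + de * (a - al)) = a * (be * (a' - a))"
        using ev dC unfolding \<tau>_def a'_def by algebra
      have e2: "(a' - al) * (al * be + be * (a' - al)) - be * (ga * be + de * (a' - al)) = 0"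
        using ev' dC unfolding \<tau>_def a'_def by algebra
      have e3: "- ((a - al) * (al * be + be * (a - al))) + be * (ga * be + de * (a - al)) = 0"
        using ev dC unfolding \<tau>_def a'_def by algebra
      have e4: "- ((a - al) * (al * be + be * (a' - al))) + be * (ga * be + de * (a' - al)) = a' * (be * (a' - a))"
        using ev' dC unfolding \<tau>_def a'_def by algebra
      have "adj2 P ** C ** P = mk2 (a * det P) 0 0 (a' * det P)"
        unfolding dP unfolding P_def C adj2_mk2 mk2_mult matrix_mul_assoc[symmetric]
        using e1 e2 e3 e4 by (simp add: algebra_simps)
      then show ?thesis using dnz by blast
    next
      case g
      define P where "P = mk2 (a - de) (a' - de) ga ga"
      have dP: "det P = ga * (a - a')" by (simp add: P_def algebra_simps)
      have dnz: "det P \<noteq> 0" using dP g ne by simp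
      have "adj2 P ** C ** P = mk2 (a * det P) 0 0 (a' * det P)"
        unfolding dP unfolding P_def C adj2_mk2 mk2_mult matrix_mul_assoc[symmetric]
        using ev ev' dC g unfolding \<tau>_def a'_def by (simp add: algebra_simps; algebra)
      then show ?thesis using dnz by blast
    next
      case z
      have "al \<noteq> de"
      proof
        assume "al = de"
        then have "al * al = 1" using dC z by simp
        then have "al = 1 \<or> al = -1" by (intro sq1)
        then show False using t2 \<open>al = de\<close> by (auto simp: \<tau>_def)
      qed
      have "(a - al) * (a - de) = 0" using ev dC z unfolding \<tau>_def by algebra
      then have "a = al \<or> a = de" by simp
      then show ?thesis
      proof
        assume "a = al"
        then have "a' = de" by (simp add: a'_def \<tau>_def)
        then have "adj2 (mat 1) ** C ** mat 1 = mk2 (a * det (mat 1 :: cm)) 0 0 (a' * det (mat 1 :: cm))"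
          using \<open>a = al\<close> z C by simp
        then show ?thesis by (metis det_I one_neq_zero)
      next
        assume "a = de"
        then have "a' = al" by (simp add: a'_def \<tau>_def)
        define P where "P = (mk2 0 1 1 0 :: cm)"
        have "adj2 P ** C ** P = mk2 (a * det P) 0 0 (a' * det P)"
          using \<open>a = de\<close> \<open>a' = al\<close> z C by (simp add: P_def)
        moreover have "det P \<noteq> 0" by (simp add: P_def)
        ultimately show ?thesis by blast
      qed
    qed
  qed
  then obtain P where P: "det P \<noteq> 0" "adj2 P ** C ** P = mk2 (a * det P) 0 0 (a' * det P)" by blast
  define P' where "P' = smul2 (inverse (det P)) (adj2 P)"
  have "P' ** C ** P = mk2 a 0 0 a'"
    unfolding P'_def smul2_mult P(2)[unfolded matrix_mul_assoc[symmetric]] matrix_mul_assoc[symmetric]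
    using P(1) by (simp add: smul2_mk2)
  then show ?thesis using inv_of_det[OF P(1)] ne unfolding P'_def by blast
qed

lemma diag_comm:
  fixes Y :: cm
  assumes "Y ** mk2 x 0 0 y = mk2 x 0 0 y ** Y" "x \<noteq> y"
  shows "Y = mk2 (Y$1$1) 0 0 (Y$2$2)"
proof -
  obtain e f g h where Y: "Y = mk2 e f g h" by (rule mk2_cases)
  have "f * y = x * f" "g * x = y * g" using assms(1) Y by (simp_all add: algebra_simps)
  then have "f * (y - x) = 0" "g * (x - y) = 0" by (simp_all add: algebra_simps)
  then have "f = 0" "g = 0" using assms(2) by auto
  then show ?thesis using Y by simp
qed

lemma conj_adj:
  fixes X P P' :: cm
  assumes inv: "P' ** P = mat 1" "P ** P' = mat 1" and dX: "det X = 1"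
    and Y: "P' ** X ** P = mk2 l 0 0 (inverse l)" and l: "l \<noteq> 0"
  shows "P' ** adj2 X ** P = mk2 (inverse l) 0 0 l"
proof -
  have "(P' ** X ** P) ** (P' ** adj2 X ** P) = P' ** (X ** (P ** P') ** adj2 X) ** P"
    by (simp add: matrix_mul_assoc)
  also have "\<dots> = mat 1" using inv det1_inv[OF dX] by (simp add: matrix_mul_assoc)
  finally have e: "mk2 l 0 0 (inverse l) ** (P' ** adj2 X ** P) = mat 1" using Y by simp
  have "P' ** adj2 X ** P = (mk2 (inverse l) 0 0 l ** mk2 l 0 0 (inverse l)) ** (P' ** adj2 X ** P)"
    using l by (simp add: mk2_one[symmetric])
  also have "\<dots> = mk2 (inverse l) 0 0 l" using e by (simp only: matrix_mul_assoc[symmetric]) simp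
  finally show ?thesis .
qed

lemma diagonalize:
  assumes rep: "is_rep R rho" and ab: "abelian_image rho"
    and t: "trace (rho Gc1) \<noteq> 2" "trace (rho Gc1) \<noteq> -2"
  shows "\<exists>lam. (\<forall>g. lam g \<noteq> 0) \<and> (\<forall>w. trace (weval rho w) = chiL lam w)
             \<and> (\<forall>w. weval rho w = mat 1 \<longrightarrow> lamw lam w = 1)"
proof -
  have dets: "det (rho g) = 1" for g using rep by (simp add: is_rep_def SL2_def)
  obtain P P' x y where inv: "P' ** P = mat 1" "P ** P' = mat 1" and dg: "P' ** rho Gc1 ** P = mk2 x 0 0 y"
    and xy: "x \<noteq> y"
    using eigen_exists[OF dets t] by blast
  have w1: "weval rho [(g, False)] = rho g" for g by simp
  have comm: "rho g ** rho Gc1 = rho Gc1 ** rho g" for g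
    using ab unfolding abelian_image_def by (metis w1)
  define lam where "lam g = (P' ** rho g ** P)$1$1" for g
  have conj_mult: "P' ** (X ** Z) ** P = (P' ** X ** P) ** (P' ** Z ** P)" for X Z :: cm
  proof -
    have "(P' ** X ** P) ** (P' ** Z ** P) = P' ** X ** (P ** P') ** Z ** P" by (simp add: matrix_mul_assoc)
    then show ?thesis using inv by (simp add: matrix_mul_assoc)
  qed
  have dconj: "det (P' ** X ** P) = det X" for X :: cm
  proof -
    have "det P' * det P = 1" using inv det_mul[of P' P] by simp
    then show ?thesis by (simp add: det_mul algebra_simps)
  qed
  have gen: "P' ** rho g ** P = mk2 (lam g) 0 0 (inverse (lam g)) \<and> lam g \<noteq> 0" for g
  proof -
    let ?Y = "P' ** rho g ** P"
    have "?Y ** mk2 x 0 0 y = P' ** (rho g ** rho Gc1) ** P" using conj_mult dg by simp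
    also have "\<dots> = mk2 x 0 0 y ** ?Y" using conj_mult dg comm by simp
    finally have Yd: "?Y = mk2 (?Y$1$1) 0 0 (?Y$2$2)" by (rule diag_comm[OF _ xy])
    have "det ?Y = 1" using dconj dets by simp
    then have "?Y$1$1 * ?Y$2$2 = 1" using Yd by (metis mk2_det mult_zero_left diff_zero)
    then have iu: "inverse (?Y$1$1) = ?Y$2$2" by (rule inverse_unique)
    have "?Y$1$1 \<noteq> 0" using \<open>?Y$1$1 * ?Y$2$2 = 1\<close> by auto
    then show ?thesis using Yd iu unfolding lam_def by metis
  qed
  have main: "P' ** weval rho w ** P = mk2 (lamw lam w) 0 0 (inverse (lamw lam w))" for w
  proof (induction w)
    case Nil then show ?case using inv by (simp add: mk2_one[symmetric])
  next
    case (Cons l w)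
    obtain g b where l: "l = (g, b)" by (cases l)
    have Z2: "P' ** rho g ** P = mk2 (lam g) 0 0 (inverse (lam g))" using gen by blast
    have Z1: "P' ** matrix_inv (rho g) ** P = mk2 (inverse (lam g)) 0 0 (lam g)"
      using gen[of g] conj_adj[OF inv dets, of g "lam g"] by (simp add: minv_adj[OF dets])
    show ?case
    proof (cases b)
      case True
      have "P' ** weval rho (l # w) ** P = (P' ** matrix_inv (rho g) ** P) ** (P' ** weval rho w ** P)"
        using l True conj_mult by simp
      then show ?thesis using Z1 Cons l True by (simp add: mult.commute)
    next
      case False
      have "P' ** weval rho (l # w) ** P = (P' ** rho g ** P) ** (P' ** weval rho w ** P)"
        using l False conj_mult by simp
      then show ?thesis using Z2 Cons l False by (simp add: mult.commute)
    qed
  qed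
  have lnz: "\<forall>g. lam g \<noteq> 0" using gen by blast
  have tr: "trace (weval rho w) = chiL lam w" for w
  proof -
    have "P ** (P' ** weval rho w ** P) ** P' = (P ** P') ** weval rho w ** (P ** P')"
      by (simp add: matrix_mul_assoc)
    then have "weval rho w = P ** (P' ** weval rho w ** P) ** P'" using inv by simp
    then have "trace (weval rho w) = trace ((P' ** weval rho w ** P) ** (P' ** P))"
      by (metis trace_mul_sym matrix_mul_assoc)
    then show ?thesis using inv main by (simp add: chiL_def)
  qed
  have one: "weval rho w = mat 1 \<Longrightarrow> lamw lam w = 1" for w
  proof -
    assume "weval rho w = mat 1"
    then have "mk2 (lamw lam w) 0 0 (inverse (lamw lam w)) = mat 1" using main[of w] inv by simp
    then show ?thesis by (simp add: mk2_one)
  qed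
  show ?thesis using lnz tr one by blast
qed

lemma vs_fscale: "vector_space fscale"
  by unfold_locales (auto simp: fscale_def fun_eq_iff algebra_simps)

lemma tangent_lin:
  assumes "D1 \<in> char_tangent R chi" "D2 \<in> char_tangent R chi"
  shows "D1 - fscale c D2 \<in> char_tangent R chi"
  using assms unfolding char_tangent_def respects_pi1_def fscale_def
  by (auto simp: algebra_simps) (metis (no_types, lifting) distrib_left mult.left_commute)

lemma sq_from_trace:
  fixes s c :: complex
  assumes "s \<noteq> 0" "s + inverse s = c" "c * c = 4"
  shows "s * s = 1"
proof -
  have "s * s + 1 = c * s" using assms(1,2) by (auto simp: field_simps)
  then have "(2 * s - c) * (2 * s - c) = 0" using assms(3) by algebra
  then have e: "2 * s = c" by simp
  have "4 * (s * s) = c * c" by (simp add: e[symmetric] algebra_simps)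
  then have "4 * (s * s) = 4" using assms(3) by simp
  then show ?thesis by simp
qed

lemma not_sq1:
  fixes a :: complex
  assumes "a \<noteq> 0" "a + inverse a \<noteq> 2" "a + inverse a \<noteq> -2"
  shows "a * a \<noteq> 1"
proof
  assume "a * a = 1"
  then have "a = 1 \<or> a = -1" by (rule sq1)
  then show False using assms by auto
qed

lemma q_nz: "coprime p (q::int) \<Longrightarrow> p \<ge> 2 \<Longrightarrow> q \<noteq> 0"
  by auto

lemma lamw_hpow:
  assumes "lam Gh * lam Gh = 1"
  shows "lamw lam (wpow wh q) = lam Gh ^ nat \<bar>q\<bar>"
proof -
  have i: "inverse (lam Gh) = lam Gh" using assms by (simp add: inverse_unique)
  show ?thesis
    by (cases "q \<ge> 0") (auto simp: wpow_nonneg wpow_neg wh_def winv_def flip_def i)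
qed

lemma rel_lam:
  assumes "lamw lam (wpow c p @ wpow wh (- q)) = 1" "lam Gh * lam Gh = 1" "p \<ge> 0"
  shows "lamw lam c ^ nat p = lam Gh ^ nat \<bar>q\<bar>"
proof -
  have "lamw lam c ^ nat p * inverse (lam Gh ^ nat \<bar>q\<bar>) = 1"
    using assms by (simp add: wpow_uminus wpow_nonneg lamw_hpow)
  then show ?thesis by (simp add: field_simps split: if_splits)
qed

theorem proposition4p3:
  fixes p1 q1 p2 q2 p3 q3 :: int and chi :: "word \<Rightarrow> complex"
  assumes "p1 \<ge> 2" "p2 \<ge> 2" "p3 \<ge> 2"
    and "coprime p1 q1" "coprime p2 q2" "coprime p3 q3"
    and "- (of_int q1 / of_int p1) - of_int q2 / of_int p2 + of_int q3 / of_int p3 \<noteq> (0::real)"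
    and "exceptional_abelian (relators p1 q1 p2 q2 p3 q3) chi"
  shows "vector_space.dim fscale (char_tangent (relators p1 q1 p2 q2 p3 q3) chi) = 1"
proof -
  define R where "R = relators p1 q1 p2 q2 p3 q3"
  define V where "V = char_tangent R chi"
  obtain rho where rep: "is_rep R rho" and ab: "abelian_image rho" and chi: "chi = character rho"
    and h2: "chi wh = 2 \<or> chi wh = -2" and cs: "\<forall>c\<in>{wc1, wc2, wc3}. chi c \<noteq> 2 \<and> chi c \<noteq> -2"
    using assms(8) unfolding exceptional_abelian_def R_def by blast
  have tr1: "trace (rho Gc1) \<noteq> 2" "trace (rho Gc1) \<noteq> -2"
    using cs by (auto simp: chi character_def wc1_def)
  obtain lam where lnz: "\<forall>g. lam g \<noteq> 0" and trw: "\<forall>w. trace (weval rho w) = chiL lam w"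
    and one: "\<forall>w. weval rho w = mat 1 \<longrightarrow> lamw lam w = 1"
    using diagonalize[OF rep ab tr1] by blast
  have chiL: "chi = chiL lam" using trw by (auto simp: chi character_def)
  have ss: "lam Gh * lam Gh = 1"
  proof -
    have "lam Gh + inverse (lam Gh) = chi wh" by (simp add: chiL chiL_def wh_def)
    moreover have "chi wh * chi wh = 4" using h2 by auto
    ultimately show ?thesis using sq_from_trace lnz by blast
  qed
  have a1: "lam Gc1 * lam Gc1 \<noteq> 1"
    using not_sq1[of "lam Gc1"] lnz cs by (auto simp: chiL chiL_def wc1_def)
  have b1: "lam Gc2 * lam Gc2 \<noteq> 1"
    using not_sq1[of "lam Gc2"] lnz cs by (auto simp: chiL chiL_def wc2_def)
  have ab1: "(lam Gc1 * lam Gc2) * (lam Gc1 * lam Gc2) \<noteq> 1"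
    using not_sq1[of "lam Gc1 * lam Gc2"] lnz cs by (auto simp: chiL chiL_def wc3_def wc1_def wc2_def)
  have relR: "lamw lam r = 1" if "r \<in> R" for r
    using one rep that by (auto simp: is_rep_def)
  have rl1: "lam Gc1 ^ nat p1 = lam Gh ^ nat \<bar>q1\<bar>"
    using rel_lam[OF relR ss, of wc1 p1 q1] assms(1) by (simp add: R_def relators_def wc1_def)
  have rl2: "lam Gc2 ^ nat p2 = lam Gh ^ nat \<bar>q2\<bar>"
    using rel_lam[OF relR ss, of wc2 p2 q2] assms(2) by (simp add: R_def relators_def wc2_def)
  have rl3: "(lam Gc1 * lam Gc2) ^ nat p3 = lam Gh ^ nat \<bar>q3\<bar>"
    using rel_lam[OF relR ss, of wc3 p3 q3] assms(3) by (simp add: R_def relators_def wc3_def wc1_def wc2_def)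
  have q: "q1 \<noteq> 0" "q2 \<noteq> 0" "q3 \<noteq> 0" using q_nz assms(1-6) by blast+
  have eul: "of_int q3 / of_int p3 - of_int q1 / of_int p1 - of_int q2 / of_int p2 \<noteq> (0::complex)"
  proof
    assume "of_int q3 / of_int p3 - of_int q1 / of_int p1 - of_int q2 / of_int p2 = (0::complex)"
    then have "complex_of_real (of_int q3 / of_int p3 - of_int q1 / of_int p1 - of_int q2 / of_int p2) = 0"
      by simp
    then have "(of_int q3 / of_int p3 - of_int q1 / of_int p1 - of_int q2 / of_int p2 :: real) = 0"
      by (simp only: of_real_eq_0_iff)
    then show False using assms(7) by (simp add: algebra_simps)
  qed
  interpret E: exist lam p1 q1 p2 q2 p3 q3
    by unfold_locales (use lnz assms(1-3) q ss a1 b1 ab1 rl1 rl2 rl3 eul in auto)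
  have d0V: "E.d0 \<in> V" using E.d0_tangent by (simp add: V_def R_def chiL)
  have uniq: "D = 0" if DV: "D \<in> V" and D3: "D wc3 = 0" for D
  proof -
    interpret T: tangR R lam D p1 q1 p2 q2 p3 q3
    proof unfold_locales
      show "\<And>g. lam g \<noteq> 0" using lnz by blast
      show "\<And>u v. wequiv R u v \<Longrightarrow> D u = D v" using DV by (auto simp: V_def char_tangent_def respects_pi1_def)
      show "\<And>x y. D (x @ y) + D (x @ winv y) = chiL lam x * D y + D x * chiL lam y"
        using DV by (auto simp: V_def char_tangent_def chiL)
      show "\<And>x y. D (x @ y) = D (y @ x)" using DV by (auto simp: V_def char_tangent_def)
      show "D [] = 0" using DV by (auto simp: V_def char_tangent_def)
    qed (use R_def assms(1-3) q ss a1 b1 ab1 rl1 rl2 rl3 in auto)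
    show ?thesis using T.D_zero[OF D3] by (simp add: fun_eq_iff)
  qed
  have d03: "E.d0 wc3 \<noteq> 0"
  proof
    assume "E.d0 wc3 = 0"
    then have "E.d0 = 0" using uniq d0V by blast
    then show False using E.d0_nz by simp
  qed
  interpret VS: vector_space fscale by (rule vs_fscale)
  have span: "V \<subseteq> VS.span {E.d0}"
  proof
    fix D assume DV: "D \<in> V"
    define c where "c = D wc3 / E.d0 wc3"
    have "D - fscale c E.d0 \<in> V" using tangent_lin DV d0V by (simp add: V_def)
    moreover have "(D - fscale c E.d0) wc3 = 0" using d03 by (simp add: c_def fscale_def)
    ultimately have "D - fscale c E.d0 = 0" using uniq by blast
    then have "D = fscale c E.d0" by simp
    then show "D \<in> VS.span {E.d0}" unfolding VS.span_singleton by blast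
  qed
  have ind: "VS.independent {E.d0}"
  proof -
    have "E.d0 \<noteq> 0" using E.d0_nz by auto
    then show ?thesis by (simp add: VS.independent_insert VS.span_empty)
  qed
  have "VS.dim V = 1"
    by (rule VS.dim_unique[of "{E.d0}"]) (use d0V span ind in auto)
  then show ?thesis by (simp add: V_def R_def)
qed

end
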